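(* Let $N\ge 2$ and $M>2$ be integers and consider the indirect control system described in the context, with real Lie algebra $\mathcal{L}$ generated by $iH_0$, $i(1_S\otimes\sigma_x^j)$ and $i(1_S\otimes\sigma_y^j)$, $j=1,\dots,M$. If Condition 1 and Condition 2 hold, then $i(1_S\otimes\sigma_{[\alpha]})\in\mathcal{L}$ for every $[\alpha]\in\{x,y,z,0\}^M$ with $[\alpha]\neq(0,\dots,0)$.
   Context: The controlled system is $\mathbb{C}^N$ with orthonormal basis $|1\rangle,\dots,|N\rangle$; $e_{jk}=|j\rangle\langle k|$. $H_S=\sum_{j=1}^N E_j e_{jj}$ with real $E_j$, $\sum_j E_j=0$. For $1\le j<k\le N$: $x_{jk}=e_{jk}+e_{kj}$, $y_{jk}=i(e_{jk}-e_{kj})$, $h_j=e_{jj}-e_{j+1,j+1}$; $x_j=x_{j,j+1}$, $y_j=y_{j,j+1}$; $s_j^{(1)}=x_j$, $s_j^{(2)}=y_j$. The accessor is $(\mathbb{C}^2)^{\otimes M}$; $\sigma_\alpha^j$ is the Pauli matrix $\sigma_\alpha$ ($\alpha=x,y,z$) on the $j$-th qubit, $\sigma_0=1$, and $\sigma_{[\alpha]}=\prod_{j=1}^M\sigma^j_{\alpha_j}$ for $[\alpha]\in\{x,y,z,0\}^M$. $1_S,1_A$ denote identities. $H_A=\sum_{j=1}^M\hbar\omega_j\sigma_z^j+\sum_{j=1}^{M-1}c_j\sigma_x^j\sigma_x^{j+1}$; $H_S'=\sum_{j=1}^{N-1}d_j x_j\otimes 1_A$; $H_{SA}=\sum_{j=1}^{N-1}\sum_{k=1}^2\sum_{[\alpha]\in\{x,y\}^M}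 g^{j(k)}_{[\alpha]}\, s_j^{(k)}\otimes\sigma_{[\alpha]}$; all coefficients real; $H_0=H_S\otimes 1_A+H_S'+1_S\otimes H_A+H_{SA}$. Condition 1: $c_j\neq 0$ for $j=1,\dots,M-1$. Condition 2: there exist $2(N-1)$ elements $[\beta]_1,\dots,[\beta]_{2(N-1)}$ of $\{x,y\}^M$ such that the $2(N-1)\times 2(N-1)$ matrix $G$ whose $r$-th row is $(g^{1(1)}_{[\beta]_r},\dots,g^{(N-1)(1)}_{[\beta]_r},g^{1(2)}_{[\beta]_r},\dots,g^{(N-1)(2)}_{[\beta]_r})$ has nonzero determinant. *)

theory Defs
  imports Complex_Main "Jordan_Normal_Form.Matrix" "Jordan_Normal_Form.Determinant"
begin

text \<open>The basis vector |j> of C^N (j = 1..N) is index j-1.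
  The total space C^N (x) (C^2)^(x M) has dimension N * 2^M, with the Kronecker
  product ordering (system factor first, then qubit 1, ..., qubit M).\<close>

datatype pauli = P0 | PX | PY | PZ

definition kron :: "complex mat \<Rightarrow> complex mat \<Rightarrow> complex mat" where
  "kron A B = mat (dim_row A * dim_row B) (dim_col A * dim_col B)
     (\<lambda>(i,j). A $$ (i div dim_row B, j div dim_col B) * B $$ (i mod dim_row B, j mod dim_col B))"

definition pauli_mat :: "pauli \<Rightarrow> complex mat" where
  "pauli_mat p = (case p of
      P0 \<Rightarrow> mat_of_rows_list 2 [[1,0],[0,1]]
    | PX \<Rightarrow> mat_of_rows_list 2 [[0,1],[1,0]]
    | PY \<Rightarrow> mat_of_rows_list 2 [[0,-\<i>],[\<i>,0]]
    | PZ \<Rightarrow> mat_of_rows_list 2 [[1,0],[0,-1]])"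

fun sigma_word :: "pauli list \<Rightarrow> complex mat" where
  "sigma_word [] = 1\<^sub>m 1"
| "sigma_word (p # ps) = kron (pauli_mat p) (sigma_word ps)"

definition sigma_on :: "nat \<Rightarrow> nat \<Rightarrow> pauli \<Rightarrow> complex mat" where
  "sigma_on M j a = sigma_word ((replicate M P0)[j - 1 := a])"

definition ejk :: "nat \<Rightarrow> nat \<Rightarrow> nat \<Rightarrow> complex mat" where
  "ejk N j k = mat N N (\<lambda>(a,b). if a = j - 1 \<and> b = k - 1 then 1 else 0)"

definition xjk :: "nat \<Rightarrow> nat \<Rightarrow> nat \<Rightarrow> complex mat" where
  "xjk N j k = ejk N j k + ejk N k j"

definition yjk :: "nat \<Rightarrow> nat \<Rightarrow> nat \<Rightarrow> complex mat" where
  "yjk N j k = \<i> \<cdot>\<^sub>m (ejk N j k - ejk N k j)"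

definition s_op :: "nat \<Rightarrow> nat \<Rightarrow> nat \<Rightarrow> complex mat" where
  "s_op N j k = (if k = 1 then xjk N j (j+1) else yjk N j (j+1))"

definition msum :: "nat \<Rightarrow> ('b \<Rightarrow> complex mat) \<Rightarrow> 'b set \<Rightarrow> complex mat" where
  "msum n f A = mat n n (\<lambda>ij. \<Sum>a\<in>A. f a $$ ij)"

definition xy_words :: "nat \<Rightarrow> pauli list set" where
  "xy_words M = {w. length w = M \<and> set w \<subseteq> {PX, PY}}"

definition all_words :: "nat \<Rightarrow> pauli list set" where
  "all_words M = {w. length w = M}"

definition H_S :: "nat \<Rightarrow> (nat \<Rightarrow> real) \<Rightarrow> complex mat" where
  "H_S N E = msum N (\<lambda>j. complex_of_real (E j) \<cdot>\<^sub>m ejk N j j) {1..N}"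

definition H_A :: "nat \<Rightarrow> real \<Rightarrow> (nat \<Rightarrow> real) \<Rightarrow> (nat \<Rightarrow> real) \<Rightarrow> complex mat" where
  "H_A M hbar \<omega> c =
     msum (2^M) (\<lambda>j. complex_of_real (hbar * \<omega> j) \<cdot>\<^sub>m sigma_on M j PZ) {1..M}
   + msum (2^M) (\<lambda>j. complex_of_real (c j) \<cdot>\<^sub>m (sigma_on M j PX * sigma_on M (j+1) PX)) {1..M-1}"

definition H_S' :: "nat \<Rightarrow> nat \<Rightarrow> (nat \<Rightarrow> real) \<Rightarrow> complex mat" where
  "H_S' N M d = msum (N * 2^M) (\<lambda>j. complex_of_real (d j) \<cdot>\<^sub>m kron (xjk N j (j+1)) (1\<^sub>m (2^M))) {1..N-1}"

definition H_SA :: "nat \<Rightarrow> nat \<Rightarrow> (nat \<Rightarrow> nat \<Rightarrow> pauli list \<Rightarrow> real) \<Rightarrow> complex mat" where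
  "H_SA N M g = msum (N * 2^M)
     (\<lambda>(j,k,w). complex_of_real (g j k w) \<cdot>\<^sub>m kron (s_op N j k) (sigma_word w))
     ({1..N-1} \<times> {1,2} \<times> xy_words M)"

definition H0 :: "nat \<Rightarrow> nat \<Rightarrow> (nat \<Rightarrow> real) \<Rightarrow> real \<Rightarrow> (nat \<Rightarrow> real) \<Rightarrow> (nat \<Rightarrow> real)
                  \<Rightarrow> (nat \<Rightarrow> real) \<Rightarrow> (nat \<Rightarrow> nat \<Rightarrow> pauli list \<Rightarrow> real) \<Rightarrow> complex mat" where
  "H0 N M E hbar \<omega> c d g =
     kron (H_S N E) (1\<^sub>m (2^M)) + H_S' N M d + kron (1\<^sub>m N) (H_A M hbar \<omega> c) + H_SA N M g"

inductive_set real_lie_closure :: "complex mat set \<Rightarrow> complex mat set" for G where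
  gen: "A \<in> G \<Longrightarrow> A \<in> real_lie_closure G"
| add: "A \<in> real_lie_closure G \<Longrightarrow> B \<in> real_lie_closure G \<Longrightarrow> A + B \<in> real_lie_closure G"
| smult: "A \<in> real_lie_closure G \<Longrightarrow> complex_of_real r \<cdot>\<^sub>m A \<in> real_lie_closure G"
| comm: "A \<in> real_lie_closure G \<Longrightarrow> B \<in> real_lie_closure G \<Longrightarrow> A * B - B * A \<in> real_lie_closure G"

definition ctrl_lie_algebra :: "nat \<Rightarrow> nat \<Rightarrow> complex mat \<Rightarrow> complex mat set" where
  "ctrl_lie_algebra N M H = real_lie_closure
     ({\<i> \<cdot>\<^sub>m H} \<union> {\<i> \<cdot>\<^sub>m kron (1\<^sub>m N) (sigma_on M j a) | j a. j \<in> {1..M} \<and> a \<in> {PX, PY}})"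

text \<open>Condition 2 matrix: row r (0-based) is
  (g^{1(1)}_{beta_r},...,g^{(N-1)(1)}_{beta_r}, g^{1(2)}_{beta_r},...,g^{(N-1)(2)}_{beta_r}).\<close>
definition G_mat :: "nat \<Rightarrow> (nat \<Rightarrow> nat \<Rightarrow> pauli list \<Rightarrow> real) \<Rightarrow> (nat \<Rightarrow> pauli list) \<Rightarrow> real mat" where
  "G_mat N g \<beta> = mat (2*(N-1)) (2*(N-1))
     (\<lambda>(r,col). if col < N - 1 then g (col + 1) 1 (\<beta> r) else g (col - (N-1) + 1) 2 (\<beta> r))"

definition condition1 :: "nat \<Rightarrow> (nat \<Rightarrow> real) \<Rightarrow> bool" where
  "condition1 M c \<longleftrightarrow> (\<forall>j\<in>{1..M-1}. c j \<noteq> 0)"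

definition condition2 :: "nat \<Rightarrow> nat \<Rightarrow> (nat \<Rightarrow> nat \<Rightarrow> pauli list \<Rightarrow> real) \<Rightarrow> bool" where
  "condition2 N M g \<longleftrightarrow> (\<exists>\<beta>. (\<forall>r < 2*(N-1). \<beta> r \<in> xy_words M) \<and> det (G_mat N g \<beta>) \<noteq> 0)"

end

theory Submission
  imports Defs
begin

fun pm :: "pauli \<Rightarrow> pauli \<Rightarrow> pauli" where
  "pm P0 b = b" | "pm a P0 = a"
| "pm PX PX = P0" | "pm PY PY = P0" | "pm PZ PZ = P0"
| "pm PX PY = PZ" | "pm PY PX = PZ" | "pm PY PZ = PX" | "pm PZ PY = PX" | "pm PZ PX = PY" | "pm PX PZ = PY"

fun ph :: "pauli \<Rightarrow> pauli \<Rightarrow> complex" where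
  "ph PX PY = \<i>" | "ph PY PX = -\<i>" | "ph PY PZ = \<i>" | "ph PZ PY = -\<i>" | "ph PZ PX = \<i>" | "ph PX PZ = -\<i>"
| "ph _ _ = 1"

definition sg :: "pauli \<Rightarrow> pauli \<Rightarrow> complex" where
  "sg a b = (if a \<noteq> b \<and> a \<noteq> P0 \<and> b \<noteq> P0 then -1 else 1)"

lemma pauli_carrier[simp]: "pauli_mat a \<in> carrier_mat 2 2"
  by (cases a) (auto simp: pauli_mat_def mat_of_rows_list_def)
lemma pauli_dims[simp]: "dim_row (pauli_mat a) = 2" "dim_col (pauli_mat a) = 2"
  using pauli_carrier[of a] unfolding carrier_mat_def by auto

lemma two_cases: "(i::nat) < 2 \<Longrightarrow> i = 0 \<or> i = 1" by auto

lemma pauli_mult: "pauli_mat a * pauli_mat b = ph a b \<cdot>\<^sub>m pauli_mat (pm a b)"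
proof (rule eq_matI)
  fix i j assume "i < dim_row (ph a b \<cdot>\<^sub>m pauli_mat (pm a b))" "j < dim_col (ph a b \<cdot>\<^sub>m pauli_mat (pm a b))"
  hence "i < 2" "j < 2" by auto
  thus "(pauli_mat a * pauli_mat b) $$ (i, j) = (ph a b \<cdot>\<^sub>m pauli_mat (pm a b)) $$ (i, j)"
    by (cases a; cases b; auto dest!: two_cases simp: pauli_mat_def mat_of_rows_list_def index_mult_mat scalar_prod_def)
qed auto

lemma sum_divmod:
  fixes f :: "nat \<Rightarrow> nat \<Rightarrow> 'a::comm_monoid_add"
  assumes "b > 0"
  shows "(\<Sum>t<a*b. f (t div b) (t mod b)) = (\<Sum>s<a. \<Sum>u<b. f s u)"
proof -
  have "(\<Sum>t<a*b. f (t div b) (t mod b)) = (\<Sum>m<a. \<Sum>t\<in>{m*b..<m*b+b}. f (t div b) (t mod b))"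
    by (rule sum.nat_group[symmetric])
  also have "\<dots> = (\<Sum>s<a. \<Sum>u<b. f s u)"
  proof (rule sum.cong[OF refl])
    fix m assume "m \<in> {..<a}"
    have "(\<Sum>t\<in>{m*b..<m*b+b}. f (t div b) (t mod b)) = (\<Sum>t\<in>{0+m*b..<b+m*b}. f (t div b) (t mod b))"
      by (simp add: add.commute)
    also have "\<dots> = (\<Sum>u\<in>{0..<b}. f ((u+m*b) div b) ((u+m*b) mod b))"
      by (rule sum.shift_bounds_nat_ivl)
    also have "\<dots> = (\<Sum>u<b. f m u)"
      using assms by (intro sum.cong) auto
    finally show "(\<Sum>t\<in>{m*b..<m*b+b}. f (t div b) (t mod b)) = (\<Sum>u<b. f m u)" .
  qed
  finally show ?thesis .
qed

lemma kron_carrier[simp]: "kron A B \<in> carrier_mat (dim_row A * dim_row B) (dim_col A * dim_col B)"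
  by (simp add: kron_def)
lemma kron_dims[simp]: "dim_row (kron A B) = dim_row A * dim_row B" "dim_col (kron A B) = dim_col A * dim_col B"
  by (simp_all add: kron_def)

lemma kron_index:
  "i < dim_row A * dim_row B \<Longrightarrow> j < dim_col A * dim_col B \<Longrightarrow>
   kron A B $$ (i,j) = A $$ (i div dim_row B, j div dim_col B) * B $$ (i mod dim_row B, j mod dim_col B)"
  by (simp add: kron_def)

lemma kron_mult:
  assumes A: "A \<in> carrier_mat a1 a2" and C: "C \<in> carrier_mat a2 a3"
    and B: "B \<in> carrier_mat b1 b2" and D: "D \<in> carrier_mat b2 b3" and b2: "b2 > 0"
  shows "kron A B * kron C D = kron (A * C) (B * D)"
proof (rule eq_matI)
  show "dim_row (kron A B * kron C D) = dim_row (kron (A * C) (B * D))" using A B by simp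
  show "dim_col (kron A B * kron C D) = dim_col (kron (A * C) (B * D))" using C D by simp
  fix i j assume i: "i < dim_row (kron (A * C) (B * D))" and j: "j < dim_col (kron (A * C) (B * D))"
  hence i': "i < a1 * b1" and j': "j < a3 * b3" using A B C D by auto
  hence b1: "b1 > 0" and b3: "b3 > 0" by (auto intro: Nat.gr0I)
  have idiv: "i div b1 < a1" using i' by (metis less_mult_imp_div_less)
  have jdiv: "j div b3 < a3" using j' by (metis less_mult_imp_div_less)
  have imod: "i mod b1 < b1" using b1 by simp
  have jmod: "j mod b3 < b3" using b3 by simp
  have "(kron A B * kron C D) $$ (i,j) = (\<Sum>t<a2*b2. kron A B $$ (i,t) * kron C D $$ (t,j))"
    using A B C D i' j' by (simp add: index_mult_mat scalar_prod_def lessThan_atLeast0)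
  also have "\<dots> = (\<Sum>t<a2*b2. (A $$ (i div b1, t div b2) * B $$ (i mod b1, t mod b2)) *
          (C $$ (t div b2, j div b3) * D $$ (t mod b2, j mod b3)))"
    using A B C D i' j' by (intro sum.cong refl) (simp add: kron_index)
  also have "\<dots> = (\<Sum>s<a2. \<Sum>u<b2. (A $$ (i div b1, s) * B $$ (i mod b1, u)) *
          (C $$ (s, j div b3) * D $$ (u, j mod b3)))"
    using sum_divmod[OF b2, of "\<lambda>s u. (A $$ (i div b1, s) * B $$ (i mod b1, u)) *
          (C $$ (s, j div b3) * D $$ (u, j mod b3))" a2] by simp
  also have "\<dots> = (\<Sum>s<a2. A $$ (i div b1, s) * C $$ (s, j div b3)) * (\<Sum>u<b2. B $$ (i mod b1, u) * D $$ (u, j mod b3))"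
    by (simp add: sum_product mult_ac)
  also have "\<dots> = (A * C) $$ (i div b1, j div b3) * (B * D) $$ (i mod b1, j mod b3)"
    using A B C D idiv jdiv imod jmod by (simp add: index_mult_mat scalar_prod_def lessThan_atLeast0)
  also have "\<dots> = kron (A * C) (B * D) $$ (i,j)"
    using A B C D i' j' by (simp add: kron_index)
  finally show "(kron A B * kron C D) $$ (i,j) = kron (A * C) (B * D) $$ (i,j)" .
qed


lemma sm_sm: "a \<cdot>\<^sub>m (b \<cdot>\<^sub>m A) = (a*b) \<cdot>\<^sub>m (A::complex mat)"
  by (rule eq_matI) auto
lemma sm_one: "1 \<cdot>\<^sub>m A = (A::complex mat)"
  by (rule eq_matI) auto
lemma sm_diff: "a \<cdot>\<^sub>m A - b \<cdot>\<^sub>m A = (a-b) \<cdot>\<^sub>m (A::complex mat)"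
  by (rule eq_matI) (auto simp: algebra_simps)

lemma divmod_lt: "(i::nat) < a*b \<Longrightarrow> i div b < a \<and> i mod b < b"
  by (metis less_mult_imp_div_less mod_less_divisor mult_zero_right not_less_zero zero_less_iff_neq_zero)

lemma kron_smult: "kron (a \<cdot>\<^sub>m A) (b \<cdot>\<^sub>m B) = (a*b) \<cdot>\<^sub>m kron A B"
  by (rule eq_matI) (auto simp: kron_def dest!: divmod_lt)
lemma kron_smult_r: "kron A (b \<cdot>\<^sub>m B) = b \<cdot>\<^sub>m kron A B"
  by (rule eq_matI) (auto simp: kron_def dest!: divmod_lt)
lemma kron_smult_l: "kron (a \<cdot>\<^sub>m A) B = a \<cdot>\<^sub>m kron A B"
  by (rule eq_matI) (auto simp: kron_def dest!: divmod_lt)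

lemma kron_one: "kron (1\<^sub>m a) (1\<^sub>m b) = 1\<^sub>m (a*b)"
proof (rule eq_matI)
  fix i j assume "i < dim_row (1\<^sub>m (a * b))" "j < dim_col (1\<^sub>m (a * b))"
  hence ij: "i < a*b" "j < a*b" by auto
  hence b: "b > 0" by (auto intro: Nat.gr0I)
  have idiv: "i div b < a" "j div b < a" using ij by (auto simp: less_mult_imp_div_less)
  have "(i div b = j div b \<and> i mod b = j mod b) \<longleftrightarrow> i = j"
    by (metis div_mult_mod_eq)
  thus "kron (1\<^sub>m a) (1\<^sub>m b) $$ (i, j) = 1\<^sub>m (a * b) $$ (i, j)"
    using ij idiv b by (auto simp: kron_index)
qed auto

lemma pauli_P0: "pauli_mat P0 = 1\<^sub>m 2"
  by (rule eq_matI) (auto dest!: two_cases simp: pauli_mat_def mat_of_rows_list_def)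

lemma sigma_word_carrier[simp]: "sigma_word w \<in> carrier_mat (2^length w) (2^length w)"
  by (induction w) auto
lemma sigma_word_dims[simp]: "dim_row (sigma_word w) = 2^length w" "dim_col (sigma_word w) = 2^length w"
  using sigma_word_carrier[of w] unfolding carrier_mat_def by auto

lemma sigma_word_id: "sigma_word (replicate n P0) = 1\<^sub>m (2^n)"
  by (induction n) (auto simp: pauli_P0 kron_one)

definition wph :: "pauli list \<Rightarrow> pauli list \<Rightarrow> complex" where
  "wph w v = prod_list (map2 ph w v)"
definition wsg :: "pauli list \<Rightarrow> pauli list \<Rightarrow> complex" where
  "wsg w v = prod_list (map2 sg w v)"
definition wpm :: "pauli list \<Rightarrow> pauli list \<Rightarrow> pauli list" where
  "wpm w v = map2 pm w v"

lemma sigma_word_mult: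
  "length w = length v \<Longrightarrow> sigma_word w * sigma_word v = wph w v \<cdot>\<^sub>m sigma_word (wpm w v)"
proof (induction w arbitrary: v)
  case Nil thus ?case by (simp add: wph_def wpm_def sm_one)
next
  case (Cons a w)
  then obtain b v' where v: "v = b # v'" and len: "length w = length v'" by (cases v) auto
  have "sigma_word (a # w) * sigma_word v = kron (pauli_mat a * pauli_mat b) (sigma_word w * sigma_word v')"
    unfolding v sigma_word.simps
    by (rule kron_mult[of _ 2 2 _ 2 _ "2^length w" "2^length w" _ "2^length w"]) (use len sigma_word_carrier[of v'] in auto)
  also have "\<dots> = kron (ph a b \<cdot>\<^sub>m pauli_mat (pm a b)) (wph w v' \<cdot>\<^sub>m sigma_word (wpm w v'))"
    using Cons.IH[OF len] by (simp add: pauli_mult)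
  also have "\<dots> = wph (a # w) v \<cdot>\<^sub>m sigma_word (wpm (a # w) v)"
    by (simp add: kron_smult v wph_def wpm_def)
  finally show ?case .
qed

lemma ph_swap_sg: "ph b a = sg a b * ph a b"
  by (cases a; cases b) (auto simp: sg_def)
lemma ph_swap_cnj: "ph b a = cnj (ph a b)"
  by (cases a; cases b) auto
lemma ph_nz: "ph a b \<noteq> 0"
  by (cases a; cases b) auto
lemma pm_comm: "pm a b = pm b a"
  by (cases a; cases b) auto
lemma sg_comm: "sg a b = sg b a"
  by (auto simp: sg_def)


lemma wph_swap_sg: "length w = length v \<Longrightarrow> wph v w = wsg w v * wph w v"
  unfolding wph_def wsg_def
proof (induction w v rule: list_induct2)
  case Nil thus ?case by simp
next
  case (Cons a w b v)
  have "prod_list (map2 ph (b # v) (a # w)) = ph b a * prod_list (map2 ph v w)" by simp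
  also have "\<dots> = (sg a b * ph a b) * (prod_list (map2 sg w v) * prod_list (map2 ph w v))"
    using Cons.IH by (simp add: ph_swap_sg[of b a])
  also have "\<dots> = prod_list (map2 sg (a # w) (b # v)) * prod_list (map2 ph (a # w) (b # v))"
    by (simp add: mult_ac)
  finally show ?case .
qed

lemma wph_swap_cnj: "length w = length v \<Longrightarrow> wph v w = cnj (wph w v)"
  unfolding wph_def
proof (induction w v rule: list_induct2)
  case Nil thus ?case by simp
next
  case (Cons a w b v)
  thus ?case by (simp add: ph_swap_cnj[of a b])
qed
lemma wph_nz: "wph w v \<noteq> 0"
  unfolding wph_def
proof (induction w v rule: list_induct2')
  case (4 a w b v)
  thus ?case using ph_nz[of a b] by simp
qed auto
lemma wpm_comm: "wpm w v = wpm v w"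
  unfolding wpm_def by (induction w v rule: list_induct2') (auto simp: pm_comm)
lemma wsg_comm: "wsg w v = wsg v w"
  unfolding wsg_def by (induction w v rule: list_induct2') (auto simp: sg_comm)

lemma wph_anti:
  assumes "length w = length v" "wsg w v = -1"
  obtains r :: real where "r \<noteq> 0" "wph w v = \<i> * complex_of_real r"
proof -
  let ?p = "wph w v"
  have "wph v w = wsg w v * wph w v" "wph v w = cnj (wph w v)"
    using assms(1) by (rule wph_swap_sg, rule wph_swap_cnj)
  hence "cnj ?p = - ?p" using assms(2) by simp
  hence "Re (cnj ?p) = Re (- ?p)" by simp
  hence re: "Re ?p = 0" by simp
  have "?p = \<i> * complex_of_real (Im ?p)" using re by (simp add: complex_eq_iff)
  moreover have "Im ?p \<noteq> 0" using re wph_nz[of w v] by (simp add: complex_eq_iff)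
  ultimately show ?thesis using that by blast
qed

definition Qw :: "nat \<Rightarrow> pauli list \<Rightarrow> complex mat" where
  "Qw N w = \<i> \<cdot>\<^sub>m kron (1\<^sub>m N) (sigma_word w)"

lemma Kw_mult:
  assumes "length w = length v"
  shows "kron (1\<^sub>m N) (sigma_word w) * kron (1\<^sub>m N) (sigma_word v) = wph w v \<cdot>\<^sub>m kron (1\<^sub>m N) (sigma_word (wpm w v))"
proof -
  have "kron (1\<^sub>m N) (sigma_word w) * kron (1\<^sub>m N) (sigma_word v) = kron (1\<^sub>m N * 1\<^sub>m N) (sigma_word w * sigma_word v)"
    by (rule kron_mult[of _ N N _ N _ "2^length w" "2^length w" _ "2^length w"]) (use assms sigma_word_carrier[of v] in auto)
  also have "\<dots> = wph w v \<cdot>\<^sub>m kron (1\<^sub>m N) (sigma_word (wpm w v))"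
    using assms by (simp add: sigma_word_mult kron_smult_r)
  finally show ?thesis .
qed

lemma length_wpm[simp]: "length (wpm w v) = min (length w) (length v)"
  by (simp add: wpm_def)

lemma Qw_mult:
  assumes "length w = length v"
  shows "Qw N w * Qw N v = (- wph w v) \<cdot>\<^sub>m kron (1\<^sub>m N) (sigma_word (wpm w v))"
proof -
  let ?D = "N * 2^length w"
  have c1: "kron (1\<^sub>m N) (sigma_word w) \<in> carrier_mat ?D ?D" using kron_carrier[of "1\<^sub>m N" "sigma_word w"] by simp
  have c2: "kron (1\<^sub>m N) (sigma_word v) \<in> carrier_mat ?D ?D" using kron_carrier[of "1\<^sub>m N" "sigma_word v"] assms by simp
  have "Qw N w * Qw N v = \<i> \<cdot>\<^sub>m (\<i> \<cdot>\<^sub>m (kron (1\<^sub>m N) (sigma_word w) * kron (1\<^sub>m N) (sigma_word v)))"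
    unfolding Qw_def using c1 c2
    by (simp add: mult_smult_assoc_mat[OF c1 smult_carrier_mat[OF c2]] mult_smult_distrib[OF c1 c2])
  also have "\<dots> = (- wph w v) \<cdot>\<^sub>m kron (1\<^sub>m N) (sigma_word (wpm w v))"
    using assms by (simp add: Kw_mult sm_sm)
  finally show ?thesis .
qed

lemma Qw_comm:
  assumes "length w = length v" "wsg w v = -1"
  obtains r :: real where "r \<noteq> 0" "Qw N w * Qw N v - Qw N v * Qw N w = complex_of_real r \<cdot>\<^sub>m Qw N (wpm w v)"
proof -
  obtain r where r: "r \<noteq> 0" "wph w v = \<i> * complex_of_real r" using wph_anti[OF assms] by blast
  have swap: "wph v w = - wph w v" using wph_swap_sg[OF assms(1)] assms(2) by simp
  have "Qw N w * Qw N v - Qw N v * Qw N w =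
        (- wph w v) \<cdot>\<^sub>m kron (1\<^sub>m N) (sigma_word (wpm w v)) - (- wph v w) \<cdot>\<^sub>m kron (1\<^sub>m N) (sigma_word (wpm w v))"
    using assms(1) by (simp add: Qw_mult wpm_comm[of v w])
  also have "\<dots> = (- 2 * wph w v) \<cdot>\<^sub>m kron (1\<^sub>m N) (sigma_word (wpm w v))"
    by (simp add: sm_diff swap)
  also have "\<dots> = complex_of_real (-2 * r) \<cdot>\<^sub>m Qw N (wpm w v)"
    by (simp add: Qw_def sm_sm r(2) mult_ac)
  finally show ?thesis using that r(1) by (metis mult_eq_0_iff neg_equal_0_iff_equal zero_neq_numeral)
qed

lemma lie_closure_prod:
  assumes "Qw N w \<in> real_lie_closure G" "Qw N v \<in> real_lie_closure G"
    "length w = length v" "wsg w v = -1"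
  shows "Qw N (wpm w v) \<in> real_lie_closure G"
proof -
  obtain r :: real where r: "r \<noteq> 0" "Qw N w * Qw N v - Qw N v * Qw N w = complex_of_real r \<cdot>\<^sub>m Qw N (wpm w v)"
    using Qw_comm[OF assms(3,4)] by blast
  have "complex_of_real (1/r) \<cdot>\<^sub>m (Qw N w * Qw N v - Qw N v * Qw N w) \<in> real_lie_closure G"
    by (intro real_lie_closure.smult real_lie_closure.comm assms)
  also have "complex_of_real (1/r) \<cdot>\<^sub>m (Qw N w * Qw N v - Qw N v * Qw N w) = Qw N (wpm w v)"
    using r by (simp add: sm_sm sm_one flip: of_real_mult)
  finally show ?thesis .
qed


lemma wpm_upd: "length u = length v \<Longrightarrow> wpm u (v[i:=b]) = (wpm u v)[i := pm (u!i) b]"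
  unfolding wpm_def
proof (induction u v arbitrary: i rule: list_induct2)
  case Nil thus ?case by simp
next
  case (Cons x u y v) thus ?case by (cases i) auto
qed

lemma sg_P0[simp]: "sg a P0 = 1" "sg P0 a = 1" by (auto simp: sg_def)
lemma pm_P0[simp]: "pm a P0 = a" "pm P0 a = a" by (cases a; simp)+

lemma wsg_upd: "length u = length v \<Longrightarrow> i < length v \<Longrightarrow> v!i = P0 \<Longrightarrow> wsg u (v[i:=b]) = sg (u!i) b * wsg u v"
  unfolding wsg_def
proof (induction u v arbitrary: i rule: list_induct2)
  case Nil thus ?case by simp
next
  case (Cons x u y v) thus ?case by (cases i) (auto simp: mult_ac)
qed

lemma wpm_rep: "length u = n \<Longrightarrow> wpm u (replicate n P0) = u"
  unfolding wpm_def by (induction u arbitrary: n) auto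
lemma wsg_rep: "wsg u (replicate n P0) = 1"
  unfolding wsg_def
proof (induction u arbitrary: n)
  case (Cons a u) thus ?case by (cases n) auto
qed simp

lemma pm_nz: "pm b c \<noteq> P0 \<longleftrightarrow> b \<noteq> c" by (cases b; cases c; simp)
lemma pm_pm: "pm (pm b c) c = b" by (cases b; cases c; simp)
lemma pm_eq1: "pm b c = b \<longleftrightarrow> c = P0" by (cases b; cases c; simp)
lemma pm_eq1': "b = pm b c \<longleftrightarrow> c = P0" by (cases b; cases c; simp)
lemma pm_pm': "pm a (pm a c) = c" by (cases a; cases c; simp)
lemma upd3: "p \<noteq> q \<Longrightarrow> xs[p:=x, q:=y, p:=z] = xs[p:=z, q:=y]"
  by (metis list_update_overwrite list_update_swap)
lemma upd4: "p \<noteq> q \<Longrightarrow> xs[p:=x, q:=y, p:=z, q:=t] = xs[p:=z, q:=t]"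
  by (metis list_update_overwrite list_update_swap)
lemma pm_eq2: "pm b c = c \<longleftrightarrow> b = P0" by (cases b; cases c; simp)
lemma sg_m1: "sg x y = -1 \<longleftrightarrow> x \<noteq> y \<and> x \<noteq> P0 \<and> y \<noteq> P0" by (auto simp: sg_def)

definition e1 :: "nat \<Rightarrow> nat \<Rightarrow> pauli \<Rightarrow> pauli list" where
  "e1 M p a = (replicate M P0)[p := a]"
definition e2 :: "nat \<Rightarrow> nat \<Rightarrow> pauli \<Rightarrow> pauli \<Rightarrow> pauli list" where
  "e2 M p a b = (replicate M P0)[p := a, Suc p := b]"

lemma e_simps[simp]: "length (e1 M p a) = M" "length (e2 M p a b) = M"
  "p < M \<Longrightarrow> e1 M p a ! p = a" "Suc p < M \<Longrightarrow> e2 M p a b ! p = a" "Suc p < M \<Longrightarrow> e2 M p a b ! Suc p = b"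
  by (auto simp: e1_def e2_def nth_list_update)

lemma mult_e1:
  assumes "length u = M" "p < M"
  shows "wpm u (e1 M p a) = u[p := pm (u!p) a]" "wsg u (e1 M p a) = sg (u!p) a"
  using assms by (simp_all add: e1_def wpm_upd wsg_upd wpm_rep wsg_rep)

lemma mult_e2:
  assumes "length u = M" "Suc p < M"
  shows "wpm u (e2 M p a b) = u[p := pm (u!p) a, Suc p := pm (u!Suc p) b]"
        "wsg u (e2 M p a b) = sg (u!p) a * sg (u!Suc p) b"
  using assms by (simp_all add: e2_def wpm_upd wsg_upd wpm_rep wsg_rep nth_list_update)

lemma combinatorial:
  fixes P :: "pauli list \<Rightarrow> bool"
  assumes G1: "\<And>p a. p < M \<Longrightarrow> a \<noteq> P0 \<Longrightarrow> P (e1 M p a)"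
    and G2: "\<And>p. Suc p < M \<Longrightarrow> P (e2 M p PX PX)"
    and CL: "\<And>w v. P w \<Longrightarrow> P v \<Longrightarrow> length w = M \<Longrightarrow> length v = M \<Longrightarrow> wsg w v = -1 \<Longrightarrow> P (wpm w v)"
  shows "length w = M \<Longrightarrow> w \<noteq> replicate M P0 \<Longrightarrow> P w"
proof -
  have A2: "P (e2 M p c PX)" if "Suc p < M" "c \<noteq> P0" for p c
  proof (cases "c = PX")
    case True thus ?thesis using G2 that by simp
  next
    case False
    let ?e = "pm PX c"
    have "P (wpm (e2 M p PX PX) (e1 M p ?e))"
      using that False by (intro CL G2 G1) (auto simp: mult_e1 nth_list_update sg_m1 pm_nz pm_eq1 pm_eq1' pm_eq2)
    moreover have "wpm (e2 M p PX PX) (e1 M p ?e) = e2 M p c PX"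
      using that by (simp add: mult_e1 e2_def nth_list_update pm_pm' upd3)
    ultimately show ?thesis by simp
  qed
  have A3: "P (e2 M p c d)" if "Suc p < M" "c \<noteq> P0" "d \<noteq> P0" for p c d
  proof (cases "d = PX")
    case True thus ?thesis using A2 that by simp
  next
    case False
    let ?f = "pm PX d"
    have "P (wpm (e2 M p c PX) (e1 M (Suc p) ?f))"
      using that False by (intro CL A2 G1) (auto simp: mult_e1 nth_list_update sg_m1 pm_nz pm_eq1 pm_eq1' pm_eq2)
    moreover have "wpm (e2 M p c PX) (e1 M (Suc p) ?f) = e2 M p c d"
      using that by (simp add: mult_e1 e2_def nth_list_update pm_pm')
    ultimately show ?thesis by simp
  qed
  have Q: "\<forall>w. length w = M \<longrightarrow> w \<noteq> replicate M P0 \<longrightarrow> (\<forall>k. n \<le> k \<longrightarrow> k < M \<longrightarrow> w!k = P0) \<longrightarrow> P w" for n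
  proof (induction n)
    case 0
    show ?case
    proof (intro allI impI)
      fix w :: "pauli list" assume "length w = M" "w \<noteq> replicate M P0" "\<forall>k. 0 \<le> k \<longrightarrow> k < M \<longrightarrow> w ! k = P0"
      hence False by (metis in_set_conv_nth replicate_eqI zero_le)
      thus "P w" ..
    qed
  next
    case (Suc n)
    have C1: "P w'" if len: "length w' = M" and supp: "\<forall>k. Suc n \<le> k \<longrightarrow> k < M \<longrightarrow> w'!k = P0"
       and nm: "n = Suc m" "n < M" and wm: "w'!m \<noteq> P0" and wn: "w'!n \<noteq> P0" for w' m
    proof -
      define b where "b = w'!m"
      define c where "c = (if b = PX then PY else PX)"
      define u where "u = w'[m := pm b c, n := P0]"
      have bc: "b \<noteq> c" "c \<noteq> P0" "b \<noteq> P0" using wm by (auto simp: b_def c_def)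
      have lu: "length u = M" using len by (simp add: u_def)
      have um: "u!m = pm b c" "u!n = P0" using nm len by (auto simp: u_def nth_list_update)
      have "u \<noteq> replicate M P0" using um bc nm pm_nz[of b c] by auto
      moreover have "\<forall>k. n \<le> k \<longrightarrow> k < M \<longrightarrow> u ! k = P0"
          using supp nm len by (auto simp: u_def nth_list_update)
      ultimately have "P u" using Suc.IH lu by blast
      moreover have "P (e2 M m c (w'!n))" using A3 bc wn nm by auto
      ultimately have "P (wpm u (e2 M m c (w'!n)))"
        using lu nm bc um by (intro CL) (auto simp: mult_e2 sg_m1 pm_nz pm_eq2)
      moreover have "wpm u (e2 M m c (w'!n)) = w'"
        using lu nm um by (simp add: mult_e2 u_def pm_pm b_def upd4)
      ultimately show ?thesis by simp
    qed
    show ?case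
    proof (intro allI impI)
      fix w :: "pauli list" assume len: "length w = M" and ni: "w \<noteq> replicate M P0"
        and supp: "\<forall>k. Suc n \<le> k \<longrightarrow> k < M \<longrightarrow> w ! k = P0"
      show "P w"
      proof (cases "n < M \<and> w!n \<noteq> P0")
        case False
        hence "\<forall>k. n \<le> k \<longrightarrow> k < M \<longrightarrow> w ! k = P0" using supp by (metis Suc_leI le_neq_implies_less)
        thus ?thesis using Suc.IH len ni by blast
      next
        case True
        define a where "a = w!n"
        have a: "a \<noteq> P0" using True by (simp add: a_def)
        show ?thesis
        proof (cases n)
          case 0
          have "w = e1 M 0 a"
          proof (rule nth_equalityI)
            show "length w = length (e1 M 0 a)" using len by simp
            fix k assume "k < length w"
            thus "w ! k = e1 M 0 a ! k" using supp 0 len by (cases k) (auto simp: e1_def a_def)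
          qed
          thus ?thesis using G1 a True 0 by simp
        next
          case (Suc m)
          show ?thesis
          proof (cases "w!m = P0")
            case False
            thus ?thesis using C1[OF len supp Suc] True by blast
          next
            case wm: True
            define d where "d = (if a = PX then PY else PX)"
            define u where "u = w[m := PY, n := pm a d]"
            have ad: "a \<noteq> d" "d \<noteq> P0" using a by (auto simp: d_def)
            have lu: "length u = M" using len by (simp add: u_def)
            have um: "u!m = PY" "u!n = pm a d" using Suc True len by (auto simp: u_def nth_list_update)
            have "sg (pm a d) d = -1" using ad a pm_nz[of a d] pm_eq2[of a d] by (simp add: sg_m1)
            hence wsg1: "wsg u (e2 M m PY d) = -1" using lu Suc True um by (simp add: mult_e2 sg_def)
            have "P u"
            proof (rule C1[OF lu _ Suc])
              show "\<forall>k. Suc n \<le> k \<longrightarrow> k < M \<longrightarrow> u ! k = P0" using supp Suc by (auto simp: u_def nth_list_update)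
              show "n < M" using True by simp
              show "u!m \<noteq> P0" "u!n \<noteq> P0" using um ad pm_nz[of a d] by auto
            qed
            moreover have "P (e2 M m PY d)" using A3 ad Suc True by auto
            ultimately have "P (wpm u (e2 M m PY d))"
              using lu wsg1 by (intro CL) auto
            moreover have "wpm u (e2 M m PY d) = w"
              using lu Suc True um wm by (simp add: mult_e2 u_def pm_pm a_def upd4) (metis list_update_id)
            ultimately show ?thesis by simp
          qed
        qed
      qed
    qed
  qed
  show "length w = M \<Longrightarrow> w \<noteq> replicate M P0 \<Longrightarrow> P w" using Q[of M] by auto
qed


lemma ad2_identity:
  fixes K Y :: "complex mat"
  assumes K: "K \<in> carrier_mat n n" and Y: "Y \<in> carrier_mat n n" and KK: "K * K = 1\<^sub>m n"
  defines "T \<equiv> \<i> \<cdot>\<^sub>m K"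
  shows "T * (T * Y - Y * T) - (T * Y - Y * T) * T = complex_of_real 2 \<cdot>\<^sub>m (K * Y * K) + complex_of_real (-2) \<cdot>\<^sub>m Y"
proof -
  have T: "T \<in> carrier_mat n n" using K by (simp add: T_def)
  have TT: "T * T = (-1) \<cdot>\<^sub>m 1\<^sub>m n"
    using K KK by (simp add: T_def mult_smult_assoc_mat[OF K smult_carrier_mat[OF K]] mult_smult_distrib[OF K K] sm_sm)
  have W: "T * Y * T = (-1) \<cdot>\<^sub>m (K * Y * K)"
  proof -
    have "T * Y * T = \<i> \<cdot>\<^sub>m (K * Y) * (\<i> \<cdot>\<^sub>m K)"
      using K Y by (simp add: T_def mult_smult_assoc_mat)
    also have "\<dots> = (-1) \<cdot>\<^sub>m (K * Y * K)"
      using K Y by (simp add: mult_smult_assoc_mat[of _ n n] mult_smult_distrib[of _ n n] sm_sm)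
    finally show ?thesis .
  qed
  have TA: "T * (T * Y) = (-1) \<cdot>\<^sub>m Y"
    using T Y TT by (simp add: assoc_mult_mat[symmetric, of T n n T n Y n] mult_smult_assoc_mat[of _ n n])
  have TB: "T * (Y * T) = T * Y * T" using T Y by (simp add: assoc_mult_mat)
  have BT: "Y * T * T = (-1) \<cdot>\<^sub>m Y"
    using T Y TT by (simp add: assoc_mult_mat[of Y n n T n T n] mult_smult_distrib[of Y n n "1\<^sub>m n" n])
  have "T * (T * Y - Y * T) - (T * Y - Y * T) * T = (T * (T * Y) - T * (Y * T)) - (T * Y * T - Y * T * T)"
    using T Y by (simp add: mult_minus_distrib_mat[of T n n _ n] minus_mult_distrib_mat[of _ n n _ T n])
  also have "\<dots> = ((-1) \<cdot>\<^sub>m Y - (-1) \<cdot>\<^sub>m (K * Y * K)) - ((-1) \<cdot>\<^sub>m (K * Y * K) - (-1) \<cdot>\<^sub>m Y)"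
    by (simp add: TA TB BT W)
  also have "\<dots> = complex_of_real 2 \<cdot>\<^sub>m (K * Y * K) + complex_of_real (-2) \<cdot>\<^sub>m Y"
    using K Y by (intro eq_matI) auto
  finally show ?thesis .
qed


lemma half_lemma:
  assumes "Z \<in> carrier_mat n n" "Y \<in> carrier_mat n n"
  shows "complex_of_real (1/2) \<cdot>\<^sub>m (complex_of_real 2 \<cdot>\<^sub>m Z + complex_of_real (-2) \<cdot>\<^sub>m Y) + Y = (Z :: complex mat)"
  using assms by (intro eq_matI) (auto simp: field_simps)

lemma conj_closed:
  assumes T: "\<i> \<cdot>\<^sub>m K \<in> real_lie_closure G" and Y: "Y \<in> real_lie_closure G"
    and Kc: "K \<in> carrier_mat n n" and Yc: "Y \<in> carrier_mat n n" and KK: "K * K = 1\<^sub>m n"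
  shows "K * Y * K \<in> real_lie_closure G"
proof -
  let ?T = "\<i> \<cdot>\<^sub>m K"
  have "complex_of_real (1/2) \<cdot>\<^sub>m (?T * (?T * Y - Y * ?T) - (?T * Y - Y * ?T) * ?T) + Y \<in> real_lie_closure G"
    using T Y by (intro real_lie_closure.add real_lie_closure.smult real_lie_closure.comm)
  also have "complex_of_real (1/2) \<cdot>\<^sub>m (?T * (?T * Y - Y * ?T) - (?T * Y - Y * ?T) * ?T) + Y = K * Y * K"
    unfolding ad2_identity[OF Kc Yc KK] using Kc Yc by (intro half_lemma) auto
  finally show ?thesis .
qed

lemma msum_carrier[simp]: "msum n f S \<in> carrier_mat n n"
  by (simp add: msum_def)
lemma msum_dims[simp]: "dim_row (msum n f S) = n" "dim_col (msum n f S) = n"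
  by (simp_all add: msum_def)
lemma msum_index: "i < n \<Longrightarrow> j < n \<Longrightarrow> msum n f S $$ (i,j) = (\<Sum>a\<in>S. f a $$ (i,j))"
  by (simp add: msum_def)

lemma mult_msum:
  assumes A: "A \<in> carrier_mat n n" and f: "\<And>a. a \<in> S \<Longrightarrow> f a \<in> carrier_mat n n"
  shows "A * msum n f S = msum n (\<lambda>a. A * f a) S"
proof (rule eq_matI)
  fix i j assume "i < dim_row (msum n (\<lambda>a. A * f a) S)" "j < dim_col (msum n (\<lambda>a. A * f a) S)"
  hence ij: "i < n" "j < n" by auto
  have "(A * msum n f S) $$ (i,j) = (\<Sum>k<n. A $$ (i,k) * (\<Sum>a\<in>S. f a $$ (k,j)))"
    using A ij by (simp add: index_mult_mat scalar_prod_def lessThan_atLeast0 msum_index)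
  also have "\<dots> = (\<Sum>a\<in>S. \<Sum>k<n. A $$ (i,k) * f a $$ (k,j))"
    by (simp add: sum_distrib_left sum.swap[of _ "{..<n}"])
  also have "\<dots> = (\<Sum>a\<in>S. (A * f a) $$ (i,j))"
  proof (intro sum.cong refl)
    fix a assume "a \<in> S"
    hence "f a \<in> carrier_mat n n" by (rule f)
    thus "(\<Sum>k<n. A $$ (i,k) * f a $$ (k,j)) = (A * f a) $$ (i,j)"
      using A ij by (simp add: index_mult_mat scalar_prod_def lessThan_atLeast0)
  qed
  also have "\<dots> = msum n (\<lambda>a. A * f a) S $$ (i,j)" using ij by (simp add: msum_index)
  finally show "(A * msum n f S) $$ (i,j) = msum n (\<lambda>a. A * f a) S $$ (i,j)" .
qed (use A in auto)

lemma msum_mult: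
  assumes B: "B \<in> carrier_mat n n" and f: "\<And>a. a \<in> S \<Longrightarrow> f a \<in> carrier_mat n n"
  shows "msum n f S * B = msum n (\<lambda>a. f a * B) S"
proof (rule eq_matI)
  fix i j assume "i < dim_row (msum n (\<lambda>a. f a * B) S)" "j < dim_col (msum n (\<lambda>a. f a * B) S)"
  hence ij: "i < n" "j < n" by auto
  have "(msum n f S * B) $$ (i,j) = (\<Sum>k<n. (\<Sum>a\<in>S. f a $$ (i,k)) * B $$ (k,j))"
    using B ij by (simp add: index_mult_mat scalar_prod_def lessThan_atLeast0 msum_index)
  also have "\<dots> = (\<Sum>a\<in>S. \<Sum>k<n. f a $$ (i,k) * B $$ (k,j))"
    by (simp add: sum_distrib_right sum.swap[of _ "{..<n}"])
  also have "\<dots> = (\<Sum>a\<in>S. (f a * B) $$ (i,j))"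
  proof (intro sum.cong refl)
    fix a assume "a \<in> S"
    hence "f a \<in> carrier_mat n n" by (rule f)
    thus "(\<Sum>k<n. f a $$ (i,k) * B $$ (k,j)) = (f a * B) $$ (i,j)"
      using B ij by (simp add: index_mult_mat scalar_prod_def lessThan_atLeast0)
  qed
  also have "\<dots> = msum n (\<lambda>a. f a * B) S $$ (i,j)" using ij by (simp add: msum_index)
  finally show "(msum n f S * B) $$ (i,j) = msum n (\<lambda>a. f a * B) S $$ (i,j)" .
qed (use B in auto)

lemma msum_add:
  assumes "\<And>a. a \<in> S \<Longrightarrow> f a \<in> carrier_mat n n" "\<And>a. a \<in> S \<Longrightarrow> g a \<in> carrier_mat n n"
  shows "msum n f S + msum n g S = msum n (\<lambda>a. f a + g a) S"
proof (intro eq_matI)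
  fix i j assume "i < dim_row (msum n (\<lambda>a. f a + g a) S)" "j < dim_col (msum n (\<lambda>a. f a + g a) S)"
  hence ij: "i < n" "j < n" by auto
  have "(\<Sum>a\<in>S. (f a + g a) $$ (i,j)) = (\<Sum>a\<in>S. f a $$ (i,j) + g a $$ (i,j))"
  proof (intro sum.cong refl)
    fix a assume a: "a \<in> S"
    show "(f a + g a) $$ (i,j) = f a $$ (i,j) + g a $$ (i,j)" using assms(1)[OF a] assms(2)[OF a] ij by simp
  qed
  thus "(msum n f S + msum n g S) $$ (i,j) = msum n (\<lambda>a. f a + g a) S $$ (i,j)"
    using ij by (simp add: msum_index sum.distrib)
qed auto

lemma smult_msum:
  assumes "\<And>a. a \<in> S \<Longrightarrow> f a \<in> carrier_mat n n"
  shows "c \<cdot>\<^sub>m msum n f S = msum n (\<lambda>a. c \<cdot>\<^sub>m f a) S"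
proof (intro eq_matI)
  fix i j assume "i < dim_row (msum n (\<lambda>a. c \<cdot>\<^sub>m f a) S)" "j < dim_col (msum n (\<lambda>a. c \<cdot>\<^sub>m f a) S)"
  hence ij: "i < n" "j < n" by auto
  have "(\<Sum>a\<in>S. (c \<cdot>\<^sub>m f a) $$ (i,j)) = (\<Sum>a\<in>S. c * f a $$ (i,j))"
  proof (intro sum.cong refl)
    fix a assume a: "a \<in> S"
    show "(c \<cdot>\<^sub>m f a) $$ (i,j) = c * f a $$ (i,j)" using assms(1)[OF a] ij by simp
  qed
  thus "(c \<cdot>\<^sub>m msum n f S) $$ (i,j) = msum n (\<lambda>a. c \<cdot>\<^sub>m f a) S $$ (i,j)"
    using ij by (simp add: msum_index sum_distrib_left)
qed auto

lemma kron_msum: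
  assumes A: "A \<in> carrier_mat p p" and f: "\<And>a. a \<in> S \<Longrightarrow> f a \<in> carrier_mat n n"
  shows "kron A (msum n f S) = msum (p*n) (\<lambda>a. kron A (f a)) S"
proof (intro eq_matI)
  fix i j assume "i < dim_row (msum (p*n) (\<lambda>a. kron A (f a)) S)" "j < dim_col (msum (p*n) (\<lambda>a. kron A (f a)) S)"
  hence ij: "i < p*n" "j < p*n" by auto
  hence dm: "i div n < p" "j div n < p" "i mod n < n" "j mod n < n" by (auto dest!: divmod_lt)
  have "(\<Sum>a\<in>S. kron A (f a) $$ (i,j)) = (\<Sum>a\<in>S. A $$ (i div n, j div n) * f a $$ (i mod n, j mod n))"
  proof (intro sum.cong refl)
    fix a assume a: "a \<in> S"
    show "kron A (f a) $$ (i,j) = A $$ (i div n, j div n) * f a $$ (i mod n, j mod n)"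
      using f[OF a] A ij by (simp add: kron_index)
  qed
  thus "kron A (msum n f S) $$ (i,j) = msum (p*n) (\<lambda>a. kron A (f a)) S $$ (i,j)"
    using A ij dm by (simp add: kron_index msum_index sum_distrib_left)
qed (use A in auto)

lemma msum_delta:
  assumes "finite S" "j \<in> S" "f j \<in> carrier_mat n n"
  shows "msum n (\<lambda>a. if a = j then f a else 0\<^sub>m n n) S = f j"
proof (intro eq_matI)
  fix i k assume "i < dim_row (f j)" "k < dim_col (f j)"
  hence ik: "i < n" "k < n" using assms by auto
  have "(\<Sum>a\<in>S. (if a = j then f a else 0\<^sub>m n n) $$ (i,k)) = (\<Sum>a\<in>S. if a = j then f j $$ (i,k) else 0)"
    using ik by (intro sum.cong refl) auto
  also have "\<dots> = f j $$ (i,k)" using assms by simp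
  finally show "msum n (\<lambda>a. if a = j then f a else 0\<^sub>m n n) S $$ (i,k) = f j $$ (i,k)"
    using ik by (simp add: msum_index)
qed (use assms in auto)

lemma msum_zero: "msum n (\<lambda>a. 0\<^sub>m n n) S = 0\<^sub>m n n"
  by (intro eq_matI) (auto simp: msum_index)


lemma ph_self: "ph a a = 1" by (cases a) auto
lemma pm_self: "pm a a = P0" by (cases a) auto
lemma wph_self: "wph w w = 1"
  unfolding wph_def by (induction w) (auto simp: ph_self)
lemma wpm_self: "wpm w w = replicate (length w) P0"
  unfolding wpm_def by (induction w) (auto simp: pm_self)
lemma sw_sq: "sigma_word w * sigma_word w = 1\<^sub>m (2^length w)"
  unfolding sigma_word_mult[OF refl] wph_self wpm_self sigma_word_id sm_one ..

lemma sw_swap: "length v = length w \<Longrightarrow> sigma_word v * sigma_word w = wsg w v \<cdot>\<^sub>m (sigma_word w * sigma_word v)"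
proof -
  assume l: "length v = length w"
  have "sigma_word v * sigma_word w = wph v w \<cdot>\<^sub>m sigma_word (wpm v w)" using l by (rule sigma_word_mult)
  also have "\<dots> = (wsg w v * wph w v) \<cdot>\<^sub>m sigma_word (wpm w v)"
    using wph_swap_sg[of w v] l wpm_comm[of v w] by simp
  also have "\<dots> = wsg w v \<cdot>\<^sub>m (wph w v \<cdot>\<^sub>m sigma_word (wpm w v))" by (simp add: sm_sm)
  also have "\<dots> = wsg w v \<cdot>\<^sub>m (sigma_word w * sigma_word v)" using l by (simp add: sigma_word_mult)
  finally show ?thesis .
qed
lemma sw_conj:
  assumes "length v = length w"
  shows "sigma_word v * sigma_word w * sigma_word v = wsg w v \<cdot>\<^sub>m sigma_word w"
proof -
  let ?n = "2^length w"
  have c: "sigma_word v \<in> carrier_mat ?n ?n" "sigma_word w \<in> carrier_mat ?n ?n"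
    using assms sigma_word_carrier[of v] by auto
  have "sigma_word v * sigma_word w * sigma_word v = wsg w v \<cdot>\<^sub>m (sigma_word w * sigma_word v) * sigma_word v"
    unfolding sw_swap[OF assms] ..
  also have "\<dots> = wsg w v \<cdot>\<^sub>m (sigma_word w * sigma_word v * sigma_word v)"
    by (rule mult_smult_assoc_mat[OF mult_carrier_mat[OF c(2) c(1)] c(1)])
  also have "sigma_word w * sigma_word v * sigma_word v = sigma_word w * (sigma_word v * sigma_word v)"
    by (rule assoc_mult_mat[of _ ?n ?n _ ?n _ ?n]) (use c in auto)
  also have "sigma_word v * sigma_word v = 1\<^sub>m ?n" using assms sw_sq[of v] by simp
  also have "sigma_word w * 1\<^sub>m ?n = sigma_word w" using c by simp
  finally show ?thesis .
qed

lemma sigma_on_word: "sigma_on M p a = sigma_word (e1 M (p-1) a)"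
  by (simp add: sigma_on_def e1_def)

lemma sigma_on_carrier[simp]: "sigma_on M p a \<in> carrier_mat (2^M) (2^M)"
  using sigma_word_carrier[of "e1 M (p-1) a"] by (simp add: sigma_on_word)

definition Kz :: "nat \<Rightarrow> nat \<Rightarrow> nat \<Rightarrow> complex mat" where
  "Kz N M p = kron (1\<^sub>m N) (sigma_on M p PZ)"

lemma sigma_on_dims[simp]: "dim_row (sigma_on M p a) = 2^M" "dim_col (sigma_on M p a) = 2^M"
  using sigma_on_carrier[of M p a] unfolding carrier_mat_def by auto

lemma Kz_carrier[simp]: "Kz N M p \<in> carrier_mat (N*2^M) (N*2^M)"
  by (rule carrier_matI) (simp_all add: Kz_def)

lemma sz_sq: "sigma_on M p PZ * sigma_on M p PZ = 1\<^sub>m (2^M)"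
  by (simp add: sigma_on_word sw_sq)

lemma Kz_sq: "Kz N M p * Kz N M p = 1\<^sub>m (N*2^M)"
proof -
  have "Kz N M p * Kz N M p = kron (1\<^sub>m N * 1\<^sub>m N) (sigma_on M p PZ * sigma_on M p PZ)"
    unfolding Kz_def by (rule kron_mult[of _ N N _ N _ "2^M" "2^M" _ "2^M"]) auto
  thus ?thesis by (simp add: sz_sq kron_one)
qed

definition cj :: "complex mat \<Rightarrow> complex mat \<Rightarrow> complex mat" where
  "cj K Y = K * Y * K"

lemma cj_kron:
  assumes A: "A \<in> carrier_mat N N" and B: "B \<in> carrier_mat (2^M) (2^M)"
  shows "cj (Kz N M p) (kron A B) = kron A (sigma_on M p PZ * B * sigma_on M p PZ)"
proof -
  let ?s = "sigma_on M p PZ"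
  have "Kz N M p * kron A B = kron (1\<^sub>m N * A) (?s * B)"
    unfolding Kz_def by (rule kron_mult[of _ N N _ N _ "2^M" "2^M" _ "2^M"]) (use A B in auto)
  also have "\<dots> = kron A (?s * B)" using A by simp
  finally have 1: "Kz N M p * kron A B = kron A (?s * B)" .
  have "kron A (?s * B) * Kz N M p = kron (A * 1\<^sub>m N) (?s * B * ?s)"
    unfolding Kz_def by (rule kron_mult[of _ N N _ N _ "2^M" "2^M" _ "2^M"]) (use A B in auto)
  also have "\<dots> = kron A (?s * B * ?s)" using A by simp
  finally show ?thesis unfolding cj_def 1 .
qed

definition flt :: "complex mat \<Rightarrow> real \<Rightarrow> complex mat \<Rightarrow> complex mat" where
  "flt K s Y = complex_of_real (1/2) \<cdot>\<^sub>m (Y + complex_of_real s \<cdot>\<^sub>m cj K Y)"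

lemma cj_carrier: "K \<in> carrier_mat n n \<Longrightarrow> Y \<in> carrier_mat n n \<Longrightarrow> cj K Y \<in> carrier_mat n n"
  by (simp add: cj_def)
lemma flt_carrier: "K \<in> carrier_mat n n \<Longrightarrow> Y \<in> carrier_mat n n \<Longrightarrow> flt K s Y \<in> carrier_mat n n"
  by (simp add: flt_def cj_def)

lemma cj_add:
  assumes K: "K \<in> carrier_mat n n" and Y1: "Y1 \<in> carrier_mat n n" and Y2: "Y2 \<in> carrier_mat n n"
  shows "cj K (Y1 + Y2) = cj K Y1 + cj K Y2"
  unfolding cj_def using K Y1 Y2
  by (simp add: mult_add_distrib_mat[of K n n Y1 n Y2] add_mult_distrib_mat[of _ n n _ K n])

lemma flt_add:
  assumes K: "K \<in> carrier_mat n n" and Y1: "Y1 \<in> carrier_mat n n" and Y2: "Y2 \<in> carrier_mat n n"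
  shows "flt K s (Y1 + Y2) = flt K s Y1 + flt K s Y2"
  unfolding flt_def cj_add[OF assms]
  using cj_carrier[OF K Y1] cj_carrier[OF K Y2] Y1 Y2 by (intro eq_matI) (auto simp: algebra_simps)

lemma cj_msum:
  assumes K: "K \<in> carrier_mat n n" and f: "\<And>a. a \<in> S \<Longrightarrow> f a \<in> carrier_mat n n"
  shows "cj K (msum n f S) = msum n (\<lambda>a. cj K (f a)) S"
  unfolding cj_def using K f
  by (simp add: mult_msum msum_mult)

lemma flt_msum:
  assumes K: "K \<in> carrier_mat n n" and f: "\<And>a. a \<in> S \<Longrightarrow> f a \<in> carrier_mat n n"
  shows "flt K s (msum n f S) = msum n (\<lambda>a. flt K s (f a)) S"
proof -
  have c: "\<And>a. a \<in> S \<Longrightarrow> cj K (f a) \<in> carrier_mat n n" using cj_carrier[OF K] f by blast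
  have c2: "\<And>a. a \<in> S \<Longrightarrow> complex_of_real s \<cdot>\<^sub>m cj K (f a) \<in> carrier_mat n n" using c by simp
  have c3: "\<And>a. a \<in> S \<Longrightarrow> f a + complex_of_real s \<cdot>\<^sub>m cj K (f a) \<in> carrier_mat n n" using c f by simp
  have e: "cj K (msum n f S) = msum n (\<lambda>a. cj K (f a)) S" by (rule cj_msum[OF K f])
  show ?thesis unfolding flt_def e
    by (simp only: smult_msum[OF c] msum_add[OF f c2] smult_msum[OF c3])
qed

lemma flt_eig:
  assumes t: "t \<in> carrier_mat n n" and e: "cj K t = complex_of_real e \<cdot>\<^sub>m t"
  shows "flt K s t = complex_of_real ((1 + s*e)/2) \<cdot>\<^sub>m t"
  unfolding flt_def e using t by (intro eq_matI) (auto simp: field_simps)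

lemma sm0: "t \<in> carrier_mat n m \<Longrightarrow> complex_of_real 0 \<cdot>\<^sub>m t = 0\<^sub>m n m"
  by (intro eq_matI) auto
lemma sm1: "complex_of_real 1 \<cdot>\<^sub>m t = t"
  by (intro eq_matI) auto

lemma flt_closed:
  assumes "Y \<in> real_lie_closure G" "cj K Y \<in> real_lie_closure G"
  shows "flt K s Y \<in> real_lie_closure G"
  unfolding flt_def using assms by (intro real_lie_closure.add real_lie_closure.smult)


lemma gen_H: "\<i> \<cdot>\<^sub>m H \<in> ctrl_lie_algebra N M H"
  unfolding ctrl_lie_algebra_def by (rule real_lie_closure.gen) simp

lemma gen_XY:
  assumes "q < M" "a \<in> {PX, PY}"
  shows "Qw N (e1 M q a) \<in> ctrl_lie_algebra N M H"
proof -
  have "Qw N (e1 M q a) = \<i> \<cdot>\<^sub>m kron (1\<^sub>m N) (sigma_on M (Suc q) a)"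
    by (simp add: Qw_def sigma_on_word)
  thus ?thesis unfolding ctrl_lie_algebra_def using assms
    by (intro real_lie_closure.gen) (auto intro!: exI[of _ "Suc q"])
qed

lemma gen_all:
  assumes "q < M" "a \<noteq> P0"
  shows "Qw N (e1 M q a) \<in> ctrl_lie_algebra N M H"
proof (cases "a = PZ")
  case True
  have "Qw N (wpm (e1 M q PX) (e1 M q PY)) \<in> ctrl_lie_algebra N M H"
    unfolding ctrl_lie_algebra_def
    by (rule lie_closure_prod) (use assms gen_XY[of q M _ N H] in \<open>auto simp: ctrl_lie_algebra_def mult_e1 sg_def\<close>)
  moreover have "wpm (e1 M q PX) (e1 M q PY) = e1 M q PZ"
    using assms by (simp add: mult_e1) (simp add: e1_def)
  ultimately show ?thesis using True by simp
next
  case False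
  thus ?thesis using assms gen_XY[of q M a N H] by (cases a) auto
qed

lemma Kz_in:
  assumes "1 \<le> p" "p \<le> M"
  shows "\<i> \<cdot>\<^sub>m Kz N M p \<in> ctrl_lie_algebra N M H"
proof -
  have "\<i> \<cdot>\<^sub>m Kz N M p = Qw N (e1 M (p-1) PZ)" by (simp add: Kz_def Qw_def sigma_on_word)
  thus ?thesis using gen_all[of "p-1" M PZ N H] assms by simp
qed

lemma cj_in:
  assumes "1 \<le> p" "p \<le> M" "Y \<in> ctrl_lie_algebra N M H" "Y \<in> carrier_mat (N*2^M) (N*2^M)"
  shows "cj (Kz N M p) Y \<in> ctrl_lie_algebra N M H"
  unfolding cj_def using Kz_in[OF assms(1,2), of N H] assms(3,4) Kz_sq[of N M p]
  unfolding ctrl_lie_algebra_def by (intro conj_closed) auto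

lemma flt_in:
  assumes "1 \<le> p" "p \<le> M" "Y \<in> ctrl_lie_algebra N M H" "Y \<in> carrier_mat (N*2^M) (N*2^M)"
  shows "flt (Kz N M p) s Y \<in> ctrl_lie_algebra N M H"
  using cj_in[OF assms] assms(3) unfolding ctrl_lie_algebra_def by (rule flt_closed[rotated])


lemma cj_smult:
  assumes K: "K \<in> carrier_mat n n" and t: "t \<in> carrier_mat n n"
  shows "cj K (c \<cdot>\<^sub>m t) = c \<cdot>\<^sub>m cj K t"
  unfolding cj_def using K t
  by (simp add: mult_smult_distrib[OF K t] mult_smult_assoc_mat[of _ n n K n])

lemma flt_eig':
  assumes K: "K \<in> carrier_mat n n" and t: "t \<in> carrier_mat n n" and e: "cj K t = complex_of_real e \<cdot>\<^sub>m t"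
  shows "flt K s (complex_of_real a \<cdot>\<^sub>m t) = complex_of_real ((1 + s*e)/2 * a) \<cdot>\<^sub>m t"
proof -
  have "cj K (complex_of_real a \<cdot>\<^sub>m t) = complex_of_real e \<cdot>\<^sub>m (complex_of_real a \<cdot>\<^sub>m t)"
    by (simp add: cj_smult[OF K t] e sm_sm mult.commute)
  hence "flt K s (complex_of_real a \<cdot>\<^sub>m t) = complex_of_real ((1 + s*e)/2) \<cdot>\<^sub>m (complex_of_real a \<cdot>\<^sub>m t)"
    using t by (intro flt_eig) auto
  thus ?thesis by (simp add: sm_sm)
qed

definition F3 :: "complex mat \<Rightarrow> complex mat \<Rightarrow> complex mat \<Rightarrow> complex mat \<Rightarrow> complex mat" where
  "F3 K1 K2 K3 Y = flt K3 1 (flt K2 (-1) (flt K1 (-1) Y))"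

lemma F3_eig:
  assumes K: "K1 \<in> carrier_mat n n" "K2 \<in> carrier_mat n n" "K3 \<in> carrier_mat n n"
    and t: "t \<in> carrier_mat n n"
    and e: "cj K1 t = complex_of_real ea \<cdot>\<^sub>m t" "cj K2 t = complex_of_real eb \<cdot>\<^sub>m t" "cj K3 t = complex_of_real ec \<cdot>\<^sub>m t"
  shows "F3 K1 K2 K3 t = complex_of_real ((1 + ec)/2 * ((1 - eb)/2 * ((1 - ea)/2 * 1))) \<cdot>\<^sub>m t"
proof -
  have "flt K1 (-1) t = flt K1 (-1) (complex_of_real 1 \<cdot>\<^sub>m t)" by (simp only: sm1)
  also have "\<dots> = complex_of_real ((1 + (-1)*ea)/2 * 1) \<cdot>\<^sub>m t" by (rule flt_eig'[OF K(1) t e(1)])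
  finally have 1: "flt K1 (-1) t = complex_of_real ((1 + (-1)*ea)/2 * 1) \<cdot>\<^sub>m t" .
  have 2: "flt K2 (-1) (flt K1 (-1) t) = complex_of_real ((1 + (-1)*eb)/2 * ((1 + (-1)*ea)/2 * 1)) \<cdot>\<^sub>m t"
    unfolding 1 by (rule flt_eig'[OF K(2) t e(2)])
  have 3: "F3 K1 K2 K3 t = complex_of_real ((1 + 1*ec)/2 * ((1 + (-1)*eb)/2 * ((1 + (-1)*ea)/2 * 1))) \<cdot>\<^sub>m t"
    unfolding F3_def 2 by (rule flt_eig'[OF K(3) t e(3)])
  have "(1 + 1*ec)/2 * ((1 + (-1)*eb)/2 * ((1 + (-1)*ea)/2 * 1)) = (1 + ec)/2 * ((1 - eb)/2 * ((1 - ea)/2 * (1::real)))"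
    by simp
  thus ?thesis using 3 by simp
qed

lemma F3_carrier:
  assumes "K1 \<in> carrier_mat n n" "K2 \<in> carrier_mat n n" "K3 \<in> carrier_mat n n" "Y \<in> carrier_mat n n"
  shows "F3 K1 K2 K3 Y \<in> carrier_mat n n"
  unfolding F3_def using assms by (intro flt_carrier)+

lemma F3_add:
  assumes K: "K1 \<in> carrier_mat n n" "K2 \<in> carrier_mat n n" "K3 \<in> carrier_mat n n"
    and Y: "Y1 \<in> carrier_mat n n" "Y2 \<in> carrier_mat n n"
  shows "F3 K1 K2 K3 (Y1 + Y2) = F3 K1 K2 K3 Y1 + F3 K1 K2 K3 Y2"
  unfolding F3_def using K Y
  by (simp add: flt_add flt_carrier)

lemma F3_msum:
  assumes K: "K1 \<in> carrier_mat n n" "K2 \<in> carrier_mat n n" "K3 \<in> carrier_mat n n"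
    and f: "\<And>a. a \<in> S \<Longrightarrow> f a \<in> carrier_mat n n"
  shows "F3 K1 K2 K3 (msum n f S) = msum n (\<lambda>a. F3 K1 K2 K3 (f a)) S"
proof -
  have c1: "\<And>a. a \<in> S \<Longrightarrow> flt K1 (-1) (f a) \<in> carrier_mat n n" using K f by (intro flt_carrier) auto
  have c2: "\<And>a. a \<in> S \<Longrightarrow> flt K2 (-1) (flt K1 (-1) (f a)) \<in> carrier_mat n n" using K c1 f by (intro flt_carrier) auto
  show ?thesis unfolding F3_def
    by (simp add: flt_msum[OF K(1) f] flt_msum[OF K(2) c1] flt_msum[OF K(3) c2])
qed

lemma F3_in:
  assumes "1 \<le> p1" "p1 \<le> M" "1 \<le> p2" "p2 \<le> M" "1 \<le> p3" "p3 \<le> M"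
    "Y \<in> ctrl_lie_algebra N M H" "Y \<in> carrier_mat (N*2^M) (N*2^M)"
  shows "F3 (Kz N M p1) (Kz N M p2) (Kz N M p3) Y \<in> ctrl_lie_algebra N M H"
  unfolding F3_def using assms
  by (intro flt_in flt_carrier Kz_carrier) auto


lemma wph_upd: "length u = length v \<Longrightarrow> i < length v \<Longrightarrow> v!i = P0 \<Longrightarrow> wph u (v[i:=b]) = ph (u!i) b * wph u v"
  unfolding wph_def
proof (induction u v arbitrary: i rule: list_induct2)
  case Nil thus ?case by simp
next
  case (Cons x u y v) thus ?case by (cases i) (auto simp: mult_ac ph_self)
qed
lemma ph_P0: "ph a P0 = 1" by (cases a) auto
lemma wph_rep: "wph u (replicate n P0) = 1"
  unfolding wph_def
proof (induction u arbitrary: n)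
  case (Cons a u) thus ?case by (cases n) (auto simp: ph_P0)
qed simp
lemma wph_e1: "length u = M \<Longrightarrow> p < M \<Longrightarrow> wph u (e1 M p a) = ph (u!p) a"
  by (simp add: e1_def wph_upd wph_rep)

lemma xxprod:
  assumes "1 \<le> i" "i + 1 \<le> M"
  shows "sigma_on M i PX * sigma_on M (i+1) PX = sigma_word (e2 M (i-1) PX PX)"
proof -
  have a: "e1 M (i-1) PX ! i = P0" using assms by (simp add: e1_def nth_list_update)
  have "sigma_on M i PX * sigma_on M (i+1) PX = sigma_word (e1 M (i-1) PX) * sigma_word (e1 M i PX)"
    by (simp add: sigma_on_word)
  also have "\<dots> = wph (e1 M (i-1) PX) (e1 M i PX) \<cdot>\<^sub>m sigma_word (wpm (e1 M (i-1) PX) (e1 M i PX))"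
    by (simp add: sigma_word_mult)
  also have "wph (e1 M (i-1) PX) (e1 M i PX) = 1" using assms a by (simp add: wph_e1 ph_self)
  also have "wpm (e1 M (i-1) PX) (e1 M i PX) = e2 M (i-1) PX PX"
    using assms a by (simp add: mult_e1) (simp add: e1_def e2_def)
  finally show ?thesis by (simp add: sm_one)
qed

lemma sz_conj_word:
  assumes "length w = M" "1 \<le> p" "p \<le> M"
  shows "sigma_on M p PZ * sigma_word w * sigma_on M p PZ = sg (w!(p-1)) PZ \<cdot>\<^sub>m sigma_word w"
  using assms by (simp add: sigma_on_word sw_conj mult_e1)

lemma ejk_carrier[simp]: "ejk N j k \<in> carrier_mat N N" by (simp add: ejk_def)
lemma xjk_carrier[simp]: "xjk N j k \<in> carrier_mat N N" by (simp add: xjk_def)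
lemma yjk_carrier[simp]: "yjk N j k \<in> carrier_mat N N" unfolding yjk_def by (intro smult_carrier_mat minus_carrier_mat ejk_carrier)
lemma s_op_carrier[simp]: "s_op N j k \<in> carrier_mat N N" by (simp add: s_op_def)
lemma H_S_carrier[simp]: "H_S N E \<in> carrier_mat N N" by (simp add: H_S_def)
lemma H_S'_carrier[simp]: "H_S' N M d \<in> carrier_mat (N*2^M) (N*2^M)" by (simp add: H_S'_def)
lemma H_SA_carrier[simp]: "H_SA N M g \<in> carrier_mat (N*2^M) (N*2^M)" by (simp add: H_SA_def)
lemma H_A_carrier[simp]: "H_A M hbar \<omega> c \<in> carrier_mat (2^M) (2^M)" by (simp add: H_A_def)

lemma kron_carrier': "A \<in> carrier_mat a a \<Longrightarrow> B \<in> carrier_mat b b \<Longrightarrow> kron A B \<in> carrier_mat (a*b) (a*b)"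
  by (rule carrier_matI) auto

lemma cj_kron_one:
  assumes "A \<in> carrier_mat N N"
  shows "cj (Kz N M p) (kron A (1\<^sub>m (2^M))) = kron A (1\<^sub>m (2^M))"
  using assms by (simp add: cj_kron sz_sq)


definition Zs :: "nat \<Rightarrow> real \<Rightarrow> (nat \<Rightarrow> real) \<Rightarrow> complex mat" where
  "Zs M hbar \<omega> = msum (2^M) (\<lambda>j. complex_of_real (hbar * \<omega> j) \<cdot>\<^sub>m sigma_on M j PZ) {1..M}"
definition XXs :: "nat \<Rightarrow> (nat \<Rightarrow> real) \<Rightarrow> complex mat" where
  "XXs M c = msum (2^M) (\<lambda>j. complex_of_real (c j) \<cdot>\<^sub>m (sigma_on M j PX * sigma_on M (j+1) PX)) {1..M-1}"
definition Rpart :: "nat \<Rightarrow> nat \<Rightarrow> (nat \<Rightarrow> real) \<Rightarrow> (nat \<Rightarrow> real) \<Rightarrow> real \<Rightarrow> (nat \<Rightarrow> real) \<Rightarrow> complex mat" where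
  "Rpart N M E d hbar \<omega> = kron (H_S N E) (1\<^sub>m (2^M)) + H_S' N M d + kron (1\<^sub>m N) (Zs M hbar \<omega>)"
definition xt :: "nat \<Rightarrow> nat \<Rightarrow> (nat \<Rightarrow> real) \<Rightarrow> nat \<Rightarrow> complex mat" where
  "xt N M c i = \<i> \<cdot>\<^sub>m kron (1\<^sub>m N) (complex_of_real (c i) \<cdot>\<^sub>m (sigma_on M i PX * sigma_on M (i+1) PX))"
definition sat :: "nat \<Rightarrow> nat \<Rightarrow> (nat \<Rightarrow> nat \<Rightarrow> pauli list \<Rightarrow> real) \<Rightarrow> nat \<times> nat \<times> pauli list \<Rightarrow> complex mat" where
  "sat N M g x = \<i> \<cdot>\<^sub>m (case x of (j,k,w) \<Rightarrow> complex_of_real (g j k w) \<cdot>\<^sub>m kron (s_op N j k) (sigma_word w))"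

lemma Zs_carrier[simp]: "Zs M hbar \<omega> \<in> carrier_mat (2^M) (2^M)" by (simp add: Zs_def)
lemma XXs_carrier[simp]: "XXs M c \<in> carrier_mat (2^M) (2^M)" by (simp add: XXs_def)
lemma dims_extra[simp]:
  "dim_row (H_S N E) = N" "dim_col (H_S N E) = N"
  "dim_row (H_S' N M d) = N*2^M" "dim_col (H_S' N M d) = N*2^M"
  "dim_row (H_SA N M g) = N*2^M" "dim_col (H_SA N M g) = N*2^M"
  "dim_row (Zs M hbar \<omega>) = 2^M" "dim_col (Zs M hbar \<omega>) = 2^M"
  "dim_row (XXs M c) = 2^M" "dim_col (XXs M c) = 2^M"
  by (simp_all add: H_S_def H_S'_def H_SA_def Zs_def XXs_def)

lemma Rpart_carrier[simp]: "Rpart N M E d hbar \<omega> \<in> carrier_mat (N*2^M) (N*2^M)"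
  unfolding Rpart_def by (intro add_carrier_mat kron_carrier' H_S_carrier H_S'_carrier one_carrier_mat Zs_carrier)
lemma xt_carrier[simp]: "xt N M c i \<in> carrier_mat (N*2^M) (N*2^M)"
  unfolding xt_def by (intro smult_carrier_mat kron_carrier' one_carrier_mat mult_carrier_mat[OF sigma_on_carrier sigma_on_carrier])
lemma sa_term_carrier:
  assumes "x \<in> {1..N-1} \<times> {1,2} \<times> xy_words M"
  shows "(case x of (j,k,w) \<Rightarrow> complex_of_real (g j k w) \<cdot>\<^sub>m kron (s_op N j k) (sigma_word w)) \<in> carrier_mat (N*2^M) (N*2^M)"
proof -
  obtain j k w where x: "x = (j,k,w)" and w: "length w = M" using assms by (auto simp: xy_words_def)
  have sw: "sigma_word w \<in> carrier_mat (2^M) (2^M)" using w sigma_word_carrier[of w] by simp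
  show ?thesis unfolding x by (simp only: prod.case) (intro smult_carrier_mat kron_carrier' s_op_carrier sw)
qed

lemma sat_carrier: "x \<in> {1..N-1} \<times> {1,2} \<times> xy_words M \<Longrightarrow> sat N M g x \<in> carrier_mat (N*2^M) (N*2^M)"
  unfolding sat_def by (intro smult_carrier_mat sa_term_carrier)

lemma kron_add_r:
  assumes "A \<in> carrier_mat a a" "B \<in> carrier_mat b b" "C \<in> carrier_mat b b"
  shows "kron A (B + C) = kron A B + kron A C"
  using assms by (intro eq_matI) (auto simp: kron_index algebra_simps dest!: divmod_lt)

lemma kron_XXs: "\<i> \<cdot>\<^sub>m kron (1\<^sub>m N) (XXs M c) = msum (N*2^M) (xt N M c) {1..M-1}"
proof -
  have "kron (1\<^sub>m N) (XXs M c) = msum (N*2^M) (\<lambda>j. kron (1\<^sub>m N) (complex_of_real (c j) \<cdot>\<^sub>m (sigma_on M j PX * sigma_on M (j+1) PX))) {1..M-1}"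
    unfolding XXs_def by (rule kron_msum) auto
  moreover have "\<i> \<cdot>\<^sub>m msum (N*2^M) (\<lambda>j. kron (1\<^sub>m N) (complex_of_real (c j) \<cdot>\<^sub>m (sigma_on M j PX * sigma_on M (j+1) PX))) {1..M-1}
     = msum (N*2^M) (xt N M c) {1..M-1}"
    unfolding xt_def by (rule smult_msum) (intro kron_carrier' one_carrier_mat smult_carrier_mat mult_carrier_mat[OF sigma_on_carrier sigma_on_carrier])
  ultimately show ?thesis by simp
qed

lemma H_SA_msum: "\<i> \<cdot>\<^sub>m H_SA N M g = msum (N*2^M) (sat N M g) ({1..N-1} \<times> {1,2} \<times> xy_words M)"
  unfolding H_SA_def sat_def
  by (rule smult_msum) (rule sa_term_carrier)

lemma H0_split:
  "\<i> \<cdot>\<^sub>m H0 N M E hbar \<omega> c d g = \<i> \<cdot>\<^sub>m Rpart N M E d hbar \<omega> +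
     (msum (N*2^M) (xt N M c) {1..M-1} + msum (N*2^M) (sat N M g) ({1..N-1} \<times> {1,2} \<times> xy_words M))"
proof -
  let ?D = "N*2^M"
  have "kron (1\<^sub>m N) (H_A M hbar \<omega> c) = kron (1\<^sub>m N) (Zs M hbar \<omega>) + kron (1\<^sub>m N) (XXs M c)"
    unfolding H_A_def Zs_def[symmetric] XXs_def[symmetric] by (rule kron_add_r[where a=N and b="2^M"]) auto
  hence "H0 N M E hbar \<omega> c d g = kron (H_S N E) (1\<^sub>m (2^M)) + H_S' N M d + (kron (1\<^sub>m N) (Zs M hbar \<omega>) + kron (1\<^sub>m N) (XXs M c)) + H_SA N M g"
    by (simp add: H0_def)
  moreover have c: "kron (H_S N E) (1\<^sub>m (2^M)) \<in> carrier_mat ?D ?D" "kron (1\<^sub>m N) (Zs M hbar \<omega>) \<in> carrier_mat ?D ?D"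
      "kron (1\<^sub>m N) (XXs M c) \<in> carrier_mat ?D ?D"
    by (auto intro!: kron_carrier')
  ultimately have "\<i> \<cdot>\<^sub>m H0 N M E hbar \<omega> c d g = \<i> \<cdot>\<^sub>m Rpart N M E d hbar \<omega> + (\<i> \<cdot>\<^sub>m kron (1\<^sub>m N) (XXs M c) + \<i> \<cdot>\<^sub>m H_SA N M g)"
    unfolding Rpart_def using H_S'_carrier[of N M d] H_SA_carrier[of N M g]
    by (intro eq_matI) (auto simp: algebra_simps)
  thus ?thesis by (simp only: kron_XXs H_SA_msum)
qed


lemma msum_cong': "(\<And>a. a \<in> S \<Longrightarrow> f a = g a) \<Longrightarrow> msum n f S = msum n g S"
  unfolding msum_def by (intro arg_cong[where f="mat n n"] ext) (auto intro: sum.cong)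

lemma cj_kron_eig:
  assumes A: "A \<in> carrier_mat N N" and B: "B \<in> carrier_mat (2^M) (2^M)"
    and e: "sigma_on M p PZ * B * sigma_on M p PZ = complex_of_real e \<cdot>\<^sub>m B"
  shows "cj (Kz N M p) (\<alpha> \<cdot>\<^sub>m kron A B) = complex_of_real e \<cdot>\<^sub>m (\<alpha> \<cdot>\<^sub>m kron A B)"
proof -
  have kc: "kron A B \<in> carrier_mat (N*2^M) (N*2^M)" using A B by (rule kron_carrier')
  have "cj (Kz N M p) (\<alpha> \<cdot>\<^sub>m kron A B) = \<alpha> \<cdot>\<^sub>m cj (Kz N M p) (kron A B)"
    by (rule cj_smult[OF Kz_carrier kc])
  also have "cj (Kz N M p) (kron A B) = complex_of_real e \<cdot>\<^sub>m kron A B"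
    by (simp add: cj_kron[OF A B] e kron_smult_r)
  finally show ?thesis by (simp add: sm_sm mult.commute)
qed

lemma sz_smult:
  assumes B: "B \<in> carrier_mat (2^M) (2^M)"
    and e: "sigma_on M p PZ * B * sigma_on M p PZ = complex_of_real e \<cdot>\<^sub>m B"
  shows "sigma_on M p PZ * (a \<cdot>\<^sub>m B) * sigma_on M p PZ = complex_of_real e \<cdot>\<^sub>m (a \<cdot>\<^sub>m B)"
proof -
  have "sigma_on M p PZ * (a \<cdot>\<^sub>m B) * sigma_on M p PZ = a \<cdot>\<^sub>m (sigma_on M p PZ * B * sigma_on M p PZ)"
    using B by (simp add: mult_smult_distrib[OF sigma_on_carrier B] mult_smult_assoc_mat[OF mult_carrier_mat[OF sigma_on_carrier B] sigma_on_carrier])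
  thus ?thesis by (simp add: e sm_sm mult.commute)
qed

lemma sz_one: "sigma_on M p PZ * 1\<^sub>m (2^M) * sigma_on M p PZ = complex_of_real 1 \<cdot>\<^sub>m 1\<^sub>m (2^M)"
  unfolding sm1 by (simp add: sz_sq)

lemma sz_zj:
  assumes "1 \<le> p" "p \<le> M" "1 \<le> j" "j \<le> M"
  shows "sigma_on M p PZ * sigma_on M j PZ * sigma_on M p PZ = complex_of_real 1 \<cdot>\<^sub>m sigma_on M j PZ"
proof -
  have "sigma_on M p PZ * sigma_on M j PZ * sigma_on M p PZ = sg (e1 M (j-1) PZ ! (p-1)) PZ \<cdot>\<^sub>m sigma_on M j PZ"
    using assms sz_conj_word[of "e1 M (j-1) PZ" M p] by (simp add: sigma_on_word)
  also have "sg (e1 M (j-1) PZ ! (p-1)) PZ = 1" using assms by (auto simp: e1_def nth_list_update sg_def)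
  finally show ?thesis by (simp add: sm1 sm_one)
qed

lemma sz_Zs:
  assumes "1 \<le> p" "p \<le> M"
  shows "sigma_on M p PZ * Zs M hbar \<omega> * sigma_on M p PZ = complex_of_real 1 \<cdot>\<^sub>m Zs M hbar \<omega>"
proof -
  let ?s = "sigma_on M p PZ"
  let ?f = "\<lambda>j. complex_of_real (hbar * \<omega> j) \<cdot>\<^sub>m sigma_on M j PZ"
  have fc: "\<And>j. ?f j \<in> carrier_mat (2^M) (2^M)" by simp
  have "?s * Zs M hbar \<omega> = msum (2^M) (\<lambda>j. ?s * ?f j) {1..M}"
    unfolding Zs_def by (rule mult_msum[OF sigma_on_carrier fc])
  moreover have "msum (2^M) (\<lambda>j. ?s * ?f j) {1..M} * ?s = msum (2^M) (\<lambda>j. ?s * ?f j * ?s) {1..M}"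
    by (rule msum_mult[OF sigma_on_carrier]) (rule mult_carrier_mat[OF sigma_on_carrier fc])
  ultimately have "?s * Zs M hbar \<omega> * ?s = msum (2^M) (\<lambda>j. ?s * ?f j * ?s) {1..M}" by simp
  also have "\<dots> = msum (2^M) ?f {1..M}"
  proof (rule msum_cong')
    fix j assume "j \<in> {1..M}"
    hence j: "1 \<le> j" "j \<le> M" by auto
    show "?s * ?f j * ?s = ?f j"
      using sz_smult[OF sigma_on_carrier sz_zj[OF assms j]] by (simp add: sm1 sm_one)
  qed
  finally show ?thesis unfolding sm1 by (simp add: Zs_def)
qed


lemma R_inv:
  assumes "1 \<le> p" "p \<le> M"
  shows "cj (Kz N M p) (\<i> \<cdot>\<^sub>m Rpart N M E d hbar \<omega>) = complex_of_real 1 \<cdot>\<^sub>m (\<i> \<cdot>\<^sub>m Rpart N M E d hbar \<omega>)"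
proof -
  let ?K = "Kz N M p" and ?D = "N*2^M"
  have a: "cj ?K (kron (H_S N E) (1\<^sub>m (2^M))) = kron (H_S N E) (1\<^sub>m (2^M))"
    by (rule cj_kron_one) simp
  have b: "cj ?K (H_S' N M d) = H_S' N M d"
  proof -
    have fc: "\<And>j. complex_of_real (d j) \<cdot>\<^sub>m kron (xjk N j (j+1)) (1\<^sub>m (2^M)) \<in> carrier_mat ?D ?D"
      by (intro smult_carrier_mat kron_carrier' xjk_carrier one_carrier_mat)
    have "cj ?K (H_S' N M d) = msum ?D (\<lambda>j. cj ?K (complex_of_real (d j) \<cdot>\<^sub>m kron (xjk N j (j+1)) (1\<^sub>m (2^M)))) {1..N-1}"
      unfolding H_S'_def by (rule cj_msum[OF Kz_carrier fc])
    also have "\<dots> = H_S' N M d"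
      unfolding H_S'_def
    proof (rule msum_cong')
      fix j
      have kc: "kron (xjk N j (j+1)) (1\<^sub>m (2^M)) \<in> carrier_mat ?D ?D" by (intro kron_carrier') auto
      show "cj ?K (complex_of_real (d j) \<cdot>\<^sub>m kron (xjk N j (j+1)) (1\<^sub>m (2^M))) = complex_of_real (d j) \<cdot>\<^sub>m kron (xjk N j (j+1)) (1\<^sub>m (2^M))"
        unfolding cj_smult[OF Kz_carrier kc] cj_kron_one[OF xjk_carrier] ..
    qed
    finally show ?thesis .
  qed
  have c: "cj ?K (kron (1\<^sub>m N) (Zs M hbar \<omega>)) = kron (1\<^sub>m N) (Zs M hbar \<omega>)"
  proof -
    have "cj ?K (complex_of_real 1 \<cdot>\<^sub>m kron (1\<^sub>m N) (Zs M hbar \<omega>)) = complex_of_real 1 \<cdot>\<^sub>m (complex_of_real 1 \<cdot>\<^sub>m kron (1\<^sub>m N) (Zs M hbar \<omega>))"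
      by (rule cj_kron_eig[OF one_carrier_mat Zs_carrier sz_Zs[OF assms]])
    thus ?thesis by (simp only: sm1)
  qed
  have c1: "kron (H_S N E) (1\<^sub>m (2^M)) \<in> carrier_mat ?D ?D" by (intro kron_carrier') auto
  have c2: "kron (1\<^sub>m N) (Zs M hbar \<omega>) \<in> carrier_mat ?D ?D" by (intro kron_carrier') auto
  have "cj ?K (Rpart N M E d hbar \<omega>) = Rpart N M E d hbar \<omega>"
    unfolding Rpart_def using c1 c2
    by (simp add: cj_add[OF Kz_carrier] a b c)
  thus ?thesis by (simp add: cj_smult[OF Kz_carrier Rpart_carrier] sm1 sm_one)
qed

lemma xt_eig:
  assumes "1 \<le> p" "p \<le> M" "1 \<le> i" "i + 1 \<le> M"
  shows "cj (Kz N M p) (xt N M c i) = complex_of_real (if p = i \<or> p = i + 1 then -1 else 1) \<cdot>\<^sub>m xt N M c i"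
proof -
  let ?w = "e2 M (i-1) PX PX"
  have lw: "length ?w = M" by simp
  have wn: "?w!(p-1) = (if p = i \<or> p = i + 1 then PX else P0)"
  proof -
    have "?w!(p-1) = (if p-1 = Suc (i-1) then PX else if p-1 = i-1 then PX else P0)"
      unfolding e2_def using assms by (simp add: nth_list_update)
    thus ?thesis using assms by auto
  qed
  have "sigma_on M p PZ * sigma_word ?w * sigma_on M p PZ = sg (?w!(p-1)) PZ \<cdot>\<^sub>m sigma_word ?w"
    by (rule sz_conj_word[OF lw assms(1,2)])
  also have "sg (?w!(p-1)) PZ = complex_of_real (if p = i \<or> p = i + 1 then -1 else 1)"
    unfolding wn by (simp add: sg_def)
  finally have e: "sigma_on M p PZ * sigma_word ?w * sigma_on M p PZ = complex_of_real (if p = i \<or> p = i + 1 then -1 else 1) \<cdot>\<^sub>m sigma_word ?w" .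
  have swc: "sigma_word ?w \<in> carrier_mat (2^M) (2^M)" using sigma_word_carrier[of ?w] by simp
  have xt: "xt N M c i = \<i> \<cdot>\<^sub>m kron (1\<^sub>m N) (complex_of_real (c i) \<cdot>\<^sub>m sigma_word ?w)"
    unfolding xt_def xxprod[OF assms(3,4)] ..
  show ?thesis unfolding xt
    by (rule cj_kron_eig[OF one_carrier_mat smult_carrier_mat[OF swc] sz_smult[OF swc e]])
qed

lemma sat_eig:
  assumes "1 \<le> p" "p \<le> M" "x \<in> {1..N-1} \<times> {1,2} \<times> xy_words M"
  shows "cj (Kz N M p) (sat N M g x) = complex_of_real (-1) \<cdot>\<^sub>m sat N M g x"
proof -
  obtain j k w where x: "x = (j,k,w)" and w: "length w = M" "set w \<subseteq> {PX, PY}"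
    using assms(3) by (auto simp: xy_words_def)
  have "w!(p-1) \<in> set w" using w assms by auto
  hence wp: "w!(p-1) \<in> {PX, PY}" using w by auto
  have "sigma_on M p PZ * sigma_word w * sigma_on M p PZ = sg (w!(p-1)) PZ \<cdot>\<^sub>m sigma_word w"
    by (rule sz_conj_word[OF w(1) assms(1,2)])
  also have "sg (w!(p-1)) PZ = complex_of_real (-1)" using wp by (auto simp: sg_def)
  finally have e: "sigma_on M p PZ * sigma_word w * sigma_on M p PZ = complex_of_real (-1) \<cdot>\<^sub>m sigma_word w" .
  have swc: "sigma_word w \<in> carrier_mat (2^M) (2^M)" using sigma_word_carrier[of w] w by simp
  have "cj (Kz N M p) (\<i> * complex_of_real (g j k w) \<cdot>\<^sub>m kron (s_op N j k) (sigma_word w)) = complex_of_real (-1) \<cdot>\<^sub>m (\<i> * complex_of_real (g j k w) \<cdot>\<^sub>m kron (s_op N j k) (sigma_word w))"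
    by (rule cj_kron_eig[OF s_op_carrier swc e])
  moreover have "sat N M g x = \<i> * complex_of_real (g j k w) \<cdot>\<^sub>m kron (s_op N j k) (sigma_word w)"
    by (simp add: sat_def x sm_sm)
  ultimately show ?thesis by simp
qed


lemma sm0': "t \<in> carrier_mat n m \<Longrightarrow> (0::complex) \<cdot>\<^sub>m t = 0\<^sub>m n m"
  by (intro eq_matI) auto

lemma filter_result:
  assumes j: "1 \<le> j" "j + 1 \<le> M" and k: "1 \<le> k" "k \<le> M" "k \<noteq> j" "k \<noteq> j + 1"
  shows "F3 (Kz N M j) (Kz N M (j+1)) (Kz N M k) (\<i> \<cdot>\<^sub>m H0 N M E hbar \<omega> c d g) = xt N M c j"
proof -
  let ?D = "N*2^M"
  let ?F = "F3 (Kz N M j) (Kz N M (j+1)) (Kz N M k)"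
  let ?S3 = "{1..N-1} \<times> {1,2::nat} \<times> xy_words M"
  have Ks: "Kz N M j \<in> carrier_mat ?D ?D" "Kz N M (j+1) \<in> carrier_mat ?D ?D" "Kz N M k \<in> carrier_mat ?D ?D"
    by auto
  have Rc: "\<i> \<cdot>\<^sub>m Rpart N M E d hbar \<omega> \<in> carrier_mat ?D ?D" by simp
  have satc: "\<And>x. x \<in> ?S3 \<Longrightarrow> sat N M g x \<in> carrier_mat ?D ?D" by (rule sat_carrier)
  have xtc: "\<And>i. i \<in> {1..M-1} \<Longrightarrow> xt N M c i \<in> carrier_mat ?D ?D" by simp
  have 1: "?F (\<i> \<cdot>\<^sub>m Rpart N M E d hbar \<omega>) = 0\<^sub>m ?D ?D"
  proof -
    have "?F (\<i> \<cdot>\<^sub>m Rpart N M E d hbar \<omega>) = complex_of_real ((1 + 1)/2 * ((1 - 1)/2 * ((1 - 1)/2 * 1))) \<cdot>\<^sub>m (\<i> \<cdot>\<^sub>m Rpart N M E d hbar \<omega>)"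
      using j k by (intro F3_eig[OF Ks Rc] R_inv) auto
    also have "\<dots> = 0\<^sub>m ?D ?D" using Rc by (simp add: sm0')
    finally show ?thesis .
  qed
  have 2: "?F (msum ?D (xt N M c) {1..M-1}) = xt N M c j"
  proof -
    have "?F (msum ?D (xt N M c) {1..M-1}) = msum ?D (\<lambda>i. ?F (xt N M c i)) {1..M-1}"
      by (rule F3_msum[OF Ks xtc])
    also have "\<dots> = msum ?D (\<lambda>i. if i = j then xt N M c i else 0\<^sub>m ?D ?D) {1..M-1}"
    proof (rule msum_cong')
      fix i assume i: "i \<in> {1..M-1}"
      let ?ea = "if j = i \<or> j = i + 1 then -1 else 1 :: real"
      let ?eb = "if j + 1 = i \<or> j + 1 = i + 1 then -1 else 1 :: real"
      let ?ec = "if k = i \<or> k = i + 1 then -1 else 1 :: real"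
      have "?F (xt N M c i) = complex_of_real ((1 + ?ec)/2 * ((1 - ?eb)/2 * ((1 - ?ea)/2 * 1))) \<cdot>\<^sub>m xt N M c i"
        using i j k by (intro F3_eig[OF Ks xtc[OF i]] xt_eig) auto
      also have "\<dots> = (if i = j then xt N M c i else 0\<^sub>m ?D ?D)"
        using k by (cases "i = j") (auto simp: sm0' sm1 sm_one)
      finally show "?F (xt N M c i) = (if i = j then xt N M c i else 0\<^sub>m ?D ?D)" .
    qed
    also have "\<dots> = xt N M c j"
      using j by (intro msum_delta) auto
    finally show ?thesis .
  qed
  have 3: "?F (msum ?D (sat N M g) ?S3) = 0\<^sub>m ?D ?D"
  proof -
    have "?F (msum ?D (sat N M g) ?S3) = msum ?D (\<lambda>x. ?F (sat N M g x)) ?S3"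
      by (rule F3_msum[OF Ks satc])
    also have "\<dots> = msum ?D (\<lambda>x. 0\<^sub>m ?D ?D) ?S3"
    proof (rule msum_cong')
      fix x assume x: "x \<in> ?S3"
      have "?F (sat N M g x) = complex_of_real ((1 + -1)/2 * ((1 - -1)/2 * ((1 - -1)/2 * 1))) \<cdot>\<^sub>m sat N M g x"
        using x j k by (intro F3_eig[OF Ks satc[OF x]] sat_eig) auto
      also have "\<dots> = 0\<^sub>m ?D ?D" using satc[OF x] by (simp add: sm0')
      finally show "?F (sat N M g x) = 0\<^sub>m ?D ?D" .
    qed
    also have "\<dots> = 0\<^sub>m ?D ?D" by (rule msum_zero)
    finally show ?thesis .
  qed
  have mc: "msum ?D (xt N M c) {1..M-1} \<in> carrier_mat ?D ?D" "msum ?D (sat N M g) ?S3 \<in> carrier_mat ?D ?D" by auto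
  have mc3: "msum ?D (xt N M c) {1..M-1} + msum ?D (sat N M g) ?S3 \<in> carrier_mat ?D ?D" using mc by simp
  have "?F (\<i> \<cdot>\<^sub>m H0 N M E hbar \<omega> c d g) = ?F (\<i> \<cdot>\<^sub>m Rpart N M E d hbar \<omega>) + (?F (msum ?D (xt N M c) {1..M-1}) + ?F (msum ?D (sat N M g) ?S3))"
    unfolding H0_split F3_add[OF Ks Rc mc3] F3_add[OF Ks mc] ..
  also have "\<dots> = xt N M c j" unfolding 1 2 3 using xtc[of j] j by simp
  finally show ?thesis .
qed



lemma xx_in:
  assumes M: "M > 2" and j: "1 \<le> j" "j + 1 \<le> M" and cj: "c j \<noteq> 0"
  shows "Qw N (e2 M (j-1) PX PX) \<in> ctrl_lie_algebra N M (H0 N M E hbar \<omega> c d g)"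
proof -
  let ?L = "ctrl_lie_algebra N M (H0 N M E hbar \<omega> c d g)"
  define k where "k = (if j + 2 \<le> M then j + 2 else j - 1)"
  have k: "1 \<le> k" "k \<le> M" "k \<noteq> j" "k \<noteq> j + 1" using M j by (auto simp: k_def)
  have Hc: "\<i> \<cdot>\<^sub>m H0 N M E hbar \<omega> c d g \<in> carrier_mat (N*2^M) (N*2^M)"
    by (simp add: H0_def)
  have "F3 (Kz N M j) (Kz N M (j+1)) (Kz N M k) (\<i> \<cdot>\<^sub>m H0 N M E hbar \<omega> c d g) \<in> ?L"
    using j k by (intro F3_in gen_H Hc) auto
  hence xin: "xt N M c j \<in> ?L" unfolding filter_result[OF j k] .
  have xt: "xt N M c j = complex_of_real (c j) \<cdot>\<^sub>m Qw N (e2 M (j-1) PX PX)"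
    unfolding xt_def xxprod[OF j] Qw_def by (simp add: kron_smult_r sm_sm mult.commute)
  have "complex_of_real (1 / c j) \<cdot>\<^sub>m xt N M c j \<in> ?L"
    using xin unfolding ctrl_lie_algebra_def by (rule real_lie_closure.smult)
  also have "complex_of_real (1 / c j) \<cdot>\<^sub>m xt N M c j = Qw N (e2 M (j-1) PX PX)"
    unfolding xt using cj by (simp add: sm_sm sm_one flip: of_real_mult)
  finally show ?thesis .
qed

theorem lemma4:
  fixes N M :: nat and E \<omega> c d :: "nat \<Rightarrow> real" and hbar :: real
    and g :: "nat \<Rightarrow> nat \<Rightarrow> pauli list \<Rightarrow> real"
  assumes "N \<ge> 2" and "M > 2"
    and "hbar > 0"
    and "(\<Sum>j=1..N. E j) = 0"
    and "condition1 M c"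
    and "condition2 N M g"
  shows "\<forall>w \<in> all_words M. w \<noteq> replicate M P0 \<longrightarrow>
           \<i> \<cdot>\<^sub>m kron (1\<^sub>m N) (sigma_word w) \<in> ctrl_lie_algebra N M (H0 N M E hbar \<omega> c d g)"
proof (intro ballI impI)
  fix w assume w: "w \<in> all_words M" "w \<noteq> replicate M P0"
  let ?L = "ctrl_lie_algebra N M (H0 N M E hbar \<omega> c d g)"
  have "Qw N w \<in> ?L"
  proof (rule combinatorial[where P = "\<lambda>w. Qw N w \<in> ?L"])
    show "length w = M" using w by (simp add: all_words_def)
    show "w \<noteq> replicate M P0" by (rule w(2))
    show "\<And>p a. p < M \<Longrightarrow> a \<noteq> P0 \<Longrightarrow> Qw N (e1 M p a) \<in> ?L" by (rule gen_all)
    show "\<And>p. Suc p < M \<Longrightarrow> Qw N (e2 M p PX PX) \<in> ?L"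
    proof -
      fix p assume p: "Suc p < M"
      have "c (Suc p) \<noteq> 0" using assms(5) p by (auto simp: condition1_def)
      thus "Qw N (e2 M p PX PX) \<in> ?L" using xx_in[OF assms(2), of "Suc p"] p by auto
    qed
    show "\<And>w v. Qw N w \<in> ?L \<Longrightarrow> Qw N v \<in> ?L \<Longrightarrow> length w = M \<Longrightarrow> length v = M \<Longrightarrow> wsg w v = -1 \<Longrightarrow> Qw N (wpm w v) \<in> ?L"
      unfolding ctrl_lie_algebra_def by (rule lie_closure_prod) auto
  qed
  thus "\<i> \<cdot>\<^sub>m kron (1\<^sub>m N) (sigma_word w) \<in> ?L" by (simp add: Qw_def)
qed

end
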